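(* A connected graph $G$ belongs to DH $\cap$ co-DH if and only if $G$ admits a sequence of twin eliminations ending in a graph isomorphic to an induced subgraph of the Bull.
   Context: All graphs are finite and simple. A graph is distance-hereditary if it has no induced subgraph isomorphic to a hole (an induced cycle of length at least $5$), the house (a $5$-cycle plus one chord), the domino (a $6$-cycle $v_1\dots v_6$ plus the chord $v_1v_4$), or the gem ($P_4$ plus a vertex adjacent to all four of its vertices). DH $\cap$ co-DH is the class of graphs $G$ such that both $G$ and its complement are distance-hereditary. Two distinct vertices $u,v$ are twins if $N(u)\setminus\{u,v\}=N(v)\setminus\{u,v\}$. A sequence of twin eliminations from $G$ to $H$ is a sequence $G=G_0,G_1,\dots,G_k=H$ ($k\ge 0$) where each $G_{i+1}=G_i-v_i$ for some vertex $v_i$ of $G_i$ having a twin in $G_i$. The Bull is the graph on vertices $a,b,c,d,e$ with edges $ab,bc,ca,ad,be$. *)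

theory Defs
  imports Main
begin

text \<open>A finite simple graph is given by a vertex set V and an adjacency
relation E; only the restriction of E to V matters.\<close>

definition simple_graph :: "'a set \<Rightarrow> ('a \<Rightarrow> 'a \<Rightarrow> bool) \<Rightarrow> bool" where
  "simple_graph V E \<longleftrightarrow> finite V \<and> (\<forall>x\<in>V. \<forall>y\<in>V. E x y \<longleftrightarrow> E y x) \<and> (\<forall>x\<in>V. \<not> E x x)"

definition connected_graph :: "'a set \<Rightarrow> ('a \<Rightarrow> 'a \<Rightarrow> bool) \<Rightarrow> bool" where
  "connected_graph V E \<longleftrightarrow> V \<noteq> {} \<and>
     (\<forall>x\<in>V. \<forall>y\<in>V. (\<lambda>a b. a \<in> V \<and> b \<in> V \<and> E a b)\<^sup>*\<^sup>* x y)"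

definition complement_graph :: "('a \<Rightarrow> 'a \<Rightarrow> bool) \<Rightarrow> 'a \<Rightarrow> 'a \<Rightarrow> bool" where
  "complement_graph E x y \<longleftrightarrow> x \<noteq> y \<and> \<not> E x y"

definition graph_iso :: "'a set \<Rightarrow> ('a \<Rightarrow> 'a \<Rightarrow> bool) \<Rightarrow> 'b set \<Rightarrow> ('b \<Rightarrow> 'b \<Rightarrow> bool) \<Rightarrow> bool" where
  "graph_iso V E W F \<longleftrightarrow> (\<exists>f. bij_betw f V W \<and> (\<forall>x\<in>V. \<forall>y\<in>V. E x y \<longleftrightarrow> F (f x) (f y)))"

definition has_induced :: "'a set \<Rightarrow> ('a \<Rightarrow> 'a \<Rightarrow> bool) \<Rightarrow> 'b set \<Rightarrow> ('b \<Rightarrow> 'b \<Rightarrow> bool) \<Rightarrow> bool" where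
  "has_induced V E W F \<longleftrightarrow> (\<exists>S\<subseteq>V. graph_iso S E W F)"

definition cycle_adj :: "nat \<Rightarrow> nat \<Rightarrow> nat \<Rightarrow> bool" where
  "cycle_adj k i j \<longleftrightarrow> j = (i + 1) mod k \<or> i = (j + 1) mod k"

definition house_adj :: "nat \<Rightarrow> nat \<Rightarrow> bool" where
  "house_adj i j \<longleftrightarrow> cycle_adj 5 i j \<or> {i, j} = {0, 2}"

definition domino_adj :: "nat \<Rightarrow> nat \<Rightarrow> bool" where
  "domino_adj i j \<longleftrightarrow> cycle_adj 6 i j \<or> {i, j} = {0, 3}"

definition gem_adj :: "nat \<Rightarrow> nat \<Rightarrow> bool" where
  "gem_adj i j \<longleftrightarrow> {i, j} \<in> {{0,1},{1,2},{2,3},{4,0},{4,1},{4,2},{4,3}}"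

text \<open>Bull: a=0, b=1, c=2, d=3, e=4; edges ab, bc, ca, ad, be.\<close>
definition bull_adj :: "nat \<Rightarrow> nat \<Rightarrow> bool" where
  "bull_adj i j \<longleftrightarrow> {i, j} \<in> {{0,1},{1,2},{2,0},{0,3},{1,4}}"

definition distance_hereditary :: "'a set \<Rightarrow> ('a \<Rightarrow> 'a \<Rightarrow> bool) \<Rightarrow> bool" where
  "distance_hereditary V E \<longleftrightarrow>
     (\<forall>k\<ge>5. \<not> has_induced V E {0..<k} (cycle_adj k)) \<and>
     \<not> has_induced V E {0..<5} house_adj \<and>
     \<not> has_induced V E {0..<6} domino_adj \<and>
     \<not> has_induced V E {0..<5} gem_adj"

definition DH_coDH :: "'a set \<Rightarrow> ('a \<Rightarrow> 'a \<Rightarrow> bool) \<Rightarrow> bool" where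
  "DH_coDH V E \<longleftrightarrow> distance_hereditary V E \<and> distance_hereditary V (complement_graph E)"

definition twins :: "'a set \<Rightarrow> ('a \<Rightarrow> 'a \<Rightarrow> bool) \<Rightarrow> 'a \<Rightarrow> 'a \<Rightarrow> bool" where
  "twins V E u v \<longleftrightarrow> u \<in> V \<and> v \<in> V \<and> u \<noteq> v \<and>
     (\<forall>w\<in>V - {u, v}. E u w \<longleftrightarrow> E v w)"

inductive twin_elim :: "('a \<Rightarrow> 'a \<Rightarrow> bool) \<Rightarrow> 'a set \<Rightarrow> 'a set \<Rightarrow> bool" for E where
  refl: "twin_elim E V V"
| step: "twins V E u v \<Longrightarrow> twin_elim E (V - {v}) W \<Longrightarrow> twin_elim E V W"

end

theory Submission
  imports Defs
begin

lemma iso_sym: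
  assumes "graph_iso V E W F" shows "graph_iso W F V E"
proof -
  obtain f where f: "bij_betw f V W" "\<forall>x\<in>V. \<forall>y\<in>V. E x y \<longleftrightarrow> F (f x) (f y)"
    using assms unfolding graph_iso_def by blast
  let ?g = "inv_into V f"
  have g: "bij_betw ?g W V" using f(1) by (rule bij_betw_inv_into)
  have "\<forall>x\<in>W. \<forall>y\<in>W. F x y \<longleftrightarrow> E (?g x) (?g y)"
  proof (intro ballI)
    fix x y assume "x \<in> W" "y \<in> W"
    then have "?g x \<in> V" "?g y \<in> V" "f (?g x) = x" "f (?g y) = y"
      using g f(1) bij_betwE bij_betw_inv_into_right by metis+
    then show "F x y \<longleftrightarrow> E (?g x) (?g y)" using f(2) by metis
  qed
  then show ?thesis using g unfolding graph_iso_def by blast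
qed

lemma iso_trans:
  assumes "graph_iso U D V E" "graph_iso V E W F" shows "graph_iso U D W F"
proof -
  obtain f where f: "bij_betw f U V" "\<forall>x\<in>U. \<forall>y\<in>U. D x y \<longleftrightarrow> E (f x) (f y)"
    using assms(1) unfolding graph_iso_def by blast
  obtain g where g: "bij_betw g V W" "\<forall>x\<in>V. \<forall>y\<in>V. E x y \<longleftrightarrow> F (g x) (g y)"
    using assms(2) unfolding graph_iso_def by blast
  have "bij_betw (g \<circ> f) U W" using f(1) g(1) by (rule bij_betw_trans)
  moreover have "\<forall>x\<in>U. \<forall>y\<in>U. D x y \<longleftrightarrow> F ((g\<circ>f) x) ((g\<circ>f) y)"
    using f g bij_betwE[OF f(1)] by auto
  ultimately show ?thesis unfolding graph_iso_def by blast
qed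

lemma iso_restrict:
  assumes "graph_iso V E W F" "S \<subseteq> V"
  shows "\<exists>T\<subseteq>W. graph_iso S E T F \<and> card T = card S"
proof -
  obtain f where f: "bij_betw f V W" "\<forall>x\<in>V. \<forall>y\<in>V. E x y \<longleftrightarrow> F (f x) (f y)"
    using assms(1) unfolding graph_iso_def by blast
  have b: "bij_betw f S (f ` S)" using f(1) assms(2)
    by (meson bij_betw_def bij_betw_subset)
  have "f ` S \<subseteq> W" using f(1) assms(2) bij_betw_imp_surj_on by blast
  moreover have "graph_iso S E (f ` S) F" unfolding graph_iso_def
    using b f(2) assms(2) by blast
  moreover have "card (f ` S) = card S" using b bij_betw_same_card by metis
  ultimately show ?thesis by blast
qed

lemma iso_card: "graph_iso V E W F \<Longrightarrow> card V = card W"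
  unfolding graph_iso_def using bij_betw_same_card by blast

lemma iso_finite: "graph_iso V E W F \<Longrightarrow> finite V \<longleftrightarrow> finite W"
  unfolding graph_iso_def using bij_betw_finite by blast

lemma has_induced_mono: "W \<subseteq> V \<Longrightarrow> has_induced W R H F \<Longrightarrow> has_induced V R H F"
  unfolding has_induced_def by blast

lemma graph_iso_cong:
  assumes "\<forall>x\<in>S. \<forall>y\<in>S. R x y = R' x y"
  shows "graph_iso S R H F = graph_iso S R' H F"
  using assms unfolding graph_iso_def by auto

lemma has_induced_cong:
  assumes "\<forall>x\<in>V. \<forall>y\<in>V. R x y = R' x y"
  shows "has_induced V R H F = has_induced V R' H F"
proof -
  have "\<And>S. S \<subseteq> V \<Longrightarrow> graph_iso S R H F = graph_iso S R' H F"
    by (rule graph_iso_cong) (use assms in blast)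
  then show ?thesis unfolding has_induced_def by blast
qed

lemma DH_mono: "W \<subseteq> V \<Longrightarrow> distance_hereditary V R \<Longrightarrow> distance_hereditary W R"
  unfolding distance_hereditary_def using has_induced_mono by blast

lemma DH_cong: "\<forall>x\<in>V. \<forall>y\<in>V. R x y = R' x y \<Longrightarrow> distance_hereditary V R = distance_hereditary V R'"
  unfolding distance_hereditary_def by (simp only: has_induced_cong[of V R R'])

definition cls :: "'a set \<Rightarrow> ('a \<Rightarrow> 'a \<Rightarrow> bool) \<Rightarrow> bool" where
  "cls V R \<longleftrightarrow> simple_graph V R \<and> DH_coDH V R"

lemma cls_mono: "W \<subseteq> V \<Longrightarrow> cls V R \<Longrightarrow> cls W R"
  unfolding cls_def DH_coDH_def simple_graph_def
  using DH_mono finite_subset by (metis subsetD)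

lemma cocomp: "simple_graph V R \<Longrightarrow> \<forall>x\<in>V. \<forall>y\<in>V. complement_graph (complement_graph R) x y = R x y"
  unfolding simple_graph_def complement_graph_def by auto

lemma simple_co: "simple_graph V R \<Longrightarrow> simple_graph V (complement_graph R)"
  unfolding simple_graph_def complement_graph_def by auto

lemma cls_co: "cls V R \<Longrightarrow> cls V (complement_graph R)"
  unfolding cls_def DH_coDH_def using simple_co DH_cong[OF cocomp] by blast

lemma twins_co: "twins V (complement_graph R) u v \<longleftrightarrow> twins V R u v"
  unfolding twins_def complement_graph_def by auto

lemma embed:
  assumes "distinct vs" "set vs \<subseteq> V" "n = length vs"
    "\<forall>i<n. \<forall>j<n. R (vs!i) (vs!j) \<longleftrightarrow> F i j"
  shows "has_induced V R {0..<n} F"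
proof -
  have "bij_betw (nth vs) {0..<n} (set vs)"
    unfolding bij_betw_def using assms(1,3)
    by (auto simp: inj_on_def nth_eq_iff_index_eq set_conv_nth)
  then have "graph_iso {0..<n} F (set vs) R" using assms(4) unfolding graph_iso_def by auto
  then show ?thesis unfolding has_induced_def using iso_sym assms(2) by blast
qed

lemma all5: "(\<forall>i<(5::nat). P i) \<longleftrightarrow> P 0 \<and> P 1 \<and> P 2 \<and> P 3 \<and> P 4"
  by (auto simp: less_Suc_eq numeral_eq_Suc)

lemma no_C5:
  assumes "cls V R" "v0\<in>V" "v1\<in>V" "v2\<in>V" "v3\<in>V" "v4\<in>V" "distinct [v0,v1,v2,v3,v4]"
   "R v0 v1" "\<not>R v0 v2" "\<not>R v0 v3" "R v0 v4" "R v1 v2" "\<not>R v1 v3" "\<not>R v1 v4" "R v2 v3" "\<not>R v2 v4" "R v3 v4"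
  shows False
proof -
  have s: "\<And>x y. x\<in>V \<Longrightarrow> y\<in>V \<Longrightarrow> R x y = R y x" "\<And>x. x\<in>V \<Longrightarrow> \<not>R x x"
    using assms(1) unfolding cls_def simple_graph_def by auto
  have i: "\<not>R v0 v0" "\<not>R v1 v1" "\<not>R v2 v2" "\<not>R v3 v3" "\<not>R v4 v4" using s(2) assms(2-6) by auto
  have f: "R v1 v0" "\<not>R v2 v0" "\<not>R v3 v0" "R v4 v0" "R v2 v1" "\<not>R v3 v1" "\<not>R v4 v1" "R v3 v2" "\<not>R v4 v2" "R v4 v3"
    using assms(2-) s(1) by metis+
  have "has_induced V R {0..<5} (cycle_adj 5)"
    apply (rule embed[of "[v0,v1,v2,v3,v4]"])
    using assms(2-) apply simp_all
    unfolding all5 using assms(7) by (simp add: i f assms(8-) cycle_adj_def)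
  then show False using assms(1) unfolding cls_def DH_coDH_def distance_hereditary_def by auto
qed

lemma no_house:
  assumes "cls V R" "v0\<in>V" "v1\<in>V" "v2\<in>V" "v3\<in>V" "v4\<in>V" "distinct [v0,v1,v2,v3,v4]"
   "R v0 v1" "R v0 v2" "\<not>R v0 v3" "R v0 v4" "R v1 v2" "\<not>R v1 v3" "\<not>R v1 v4" "R v2 v3" "\<not>R v2 v4" "R v3 v4"
  shows False
proof -
  have s: "\<And>x y. x\<in>V \<Longrightarrow> y\<in>V \<Longrightarrow> R x y = R y x" "\<And>x. x\<in>V \<Longrightarrow> \<not>R x x"
    using assms(1) unfolding cls_def simple_graph_def by auto
  have i: "\<not>R v0 v0" "\<not>R v1 v1" "\<not>R v2 v2" "\<not>R v3 v3" "\<not>R v4 v4" using s(2) assms(2-6) by auto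
  have f: "R v1 v0" "R v2 v0" "\<not>R v3 v0" "R v4 v0" "R v2 v1" "\<not>R v3 v1" "\<not>R v4 v1" "R v3 v2" "\<not>R v4 v2" "R v4 v3"
    using assms(2-) s(1) by metis+
  have "has_induced V R {0..<5} (house_adj)"
    apply (rule embed[of "[v0,v1,v2,v3,v4]"])
    using assms(2-) apply simp_all
    unfolding all5 using assms(7) by (simp add: i f assms(8-) house_adj_def cycle_adj_def doubleton_eq_iff)
  then show False using assms(1) unfolding cls_def DH_coDH_def distance_hereditary_def by auto
qed

lemma no_gem:
  assumes "cls V R" "v0\<in>V" "v1\<in>V" "v2\<in>V" "v3\<in>V" "v4\<in>V" "distinct [v0,v1,v2,v3,v4]"
   "R v0 v1" "\<not>R v0 v2" "\<not>R v0 v3" "R v0 v4" "R v1 v2" "\<not>R v1 v3" "R v1 v4" "R v2 v3" "R v2 v4" "R v3 v4"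
  shows False
proof -
  have s: "\<And>x y. x\<in>V \<Longrightarrow> y\<in>V \<Longrightarrow> R x y = R y x" "\<And>x. x\<in>V \<Longrightarrow> \<not>R x x"
    using assms(1) unfolding cls_def simple_graph_def by auto
  have i: "\<not>R v0 v0" "\<not>R v1 v1" "\<not>R v2 v2" "\<not>R v3 v3" "\<not>R v4 v4" using s(2) assms(2-6) by auto
  have f: "R v1 v0" "\<not>R v2 v0" "\<not>R v3 v0" "R v4 v0" "R v2 v1" "\<not>R v3 v1" "R v4 v1" "R v3 v2" "R v4 v2" "R v4 v3"
    using assms(2-) s(1) by metis+
  have "has_induced V R {0..<5} (gem_adj)"
    apply (rule embed[of "[v0,v1,v2,v3,v4]"])
    using assms(2-) apply simp_all
    unfolding all5 using assms(7) by (simp add: i f assms(8-) gem_adj_def doubleton_eq_iff)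
  then show False using assms(1) unfolding cls_def DH_coDH_def distance_hereditary_def by auto
qed

lemma no_cogem:
  assumes "cls V R" "v0\<in>V" "v1\<in>V" "v2\<in>V" "v3\<in>V" "v4\<in>V" "distinct [v0,v1,v2,v3,v4]"
   "\<not>R v0 v1" "R v0 v2" "R v0 v3" "\<not>R v0 v4" "\<not>R v1 v2" "R v1 v3" "\<not>R v1 v4" "\<not>R v2 v3" "\<not>R v2 v4" "\<not>R v3 v4"
  shows False
proof -
  have s: "\<And>x y. x\<in>V \<Longrightarrow> y\<in>V \<Longrightarrow> R x y = R y x" "\<And>x. x\<in>V \<Longrightarrow> \<not>R x x"
    using assms(1) unfolding cls_def simple_graph_def by auto
  have i: "\<not>R v0 v0" "\<not>R v1 v1" "\<not>R v2 v2" "\<not>R v3 v3" "\<not>R v4 v4" using s(2) assms(2-6) by auto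
  have f: "\<not>R v1 v0" "R v2 v0" "R v3 v0" "\<not>R v4 v0" "\<not>R v2 v1" "R v3 v1" "\<not>R v4 v1" "\<not>R v3 v2" "\<not>R v4 v2" "\<not>R v4 v3"
    using assms(2-) s(1) by metis+
  have "has_induced V (complement_graph R) {0..<5} (gem_adj)"
    apply (rule embed[of "[v0,v1,v2,v3,v4]"])
    using assms(2-) apply simp_all
    unfolding all5 using assms(7) by (auto simp: i f assms(8-) gem_adj_def doubleton_eq_iff complement_graph_def)
  then show False using assms(1) unfolding cls_def DH_coDH_def distance_hereditary_def by auto
qed

lemma no_P5:
  assumes "cls V R" "v0\<in>V" "v1\<in>V" "v2\<in>V" "v3\<in>V" "v4\<in>V" "distinct [v0,v1,v2,v3,v4]"
   "\<not>R v0 v1" "\<not>R v0 v2" "R v0 v3" "\<not>R v0 v4" "\<not>R v1 v2" "R v1 v3" "R v1 v4" "\<not>R v2 v3" "R v2 v4" "\<not>R v3 v4"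
  shows False
proof -
  have s: "\<And>x y. x\<in>V \<Longrightarrow> y\<in>V \<Longrightarrow> R x y = R y x" "\<And>x. x\<in>V \<Longrightarrow> \<not>R x x"
    using assms(1) unfolding cls_def simple_graph_def by auto
  have i: "\<not>R v0 v0" "\<not>R v1 v1" "\<not>R v2 v2" "\<not>R v3 v3" "\<not>R v4 v4" using s(2) assms(2-6) by auto
  have f: "\<not>R v1 v0" "\<not>R v2 v0" "R v3 v0" "\<not>R v4 v0" "\<not>R v2 v1" "R v3 v1" "R v4 v1" "\<not>R v3 v2" "R v4 v2" "\<not>R v4 v3"
    using assms(2-) s(1) by metis+
  have "has_induced V (complement_graph R) {0..<5} (house_adj)"
    apply (rule embed[of "[v0,v1,v2,v3,v4]"])
    using assms(2-) apply simp_all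
    unfolding all5 using assms(7) by (auto simp: i f assms(8-) house_adj_def cycle_adj_def doubleton_eq_iff complement_graph_def)
  then show False using assms(1) unfolding cls_def DH_coDH_def distance_hereditary_def by auto
qed

definition "TA R a b c d x \<longleftrightarrow> R b x \<and> \<not>R c x \<and> \<not>R d x"
definition "TB R a b c d x \<longleftrightarrow> R a x \<and> R c x \<and> \<not>R d x"
definition "TC R a b c d x \<longleftrightarrow> \<not>R a x \<and> R b x \<and> R d x"
definition "TD R a b c d x \<longleftrightarrow> \<not>R a x \<and> \<not>R b x \<and> R c x"
definition "TZ R a b c d x \<longleftrightarrow> \<not>R a x \<and> R b x \<and> R c x \<and> \<not>R d x"
lemmas T_defs = TA_def TB_def TC_def TD_def TZ_def
lemma five:
  assumes cl: "cls V R" and mem: "a\<in>V" "b\<in>V" "c\<in>V" "d\<in>V" "x\<in>V"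
    and dist: "distinct [a,b,c,d,x]"
    and p4: "R a b" "R b c" "R c d" "\<not>R a c" "\<not>R a d" "\<not>R b d"
  shows "TA R a b c d x \<or> TB R a b c d x \<or> TC R a b c d x \<or> TD R a b c d x \<or> TZ R a b c d x"
proof -
  have s: "\<And>u w. u\<in>V \<Longrightarrow> w\<in>V \<Longrightarrow> R u w = R w u"
    using cl unfolding cls_def simple_graph_def by auto
  have sy: "R b a = R a b" "R c a = R a c" "R d a = R a d" "R x a = R a x" "R c b = R b c" "R d b = R b d" "R x b = R b x" "R d c = R c d" "R x c = R c x" "R x d = R d x"
    using s mem by blast+
  show ?thesis
    apply (cases "R a x"; cases "R b x"; cases "R c x"; cases "R d x")
    subgoal by (rule no_gem[OF cl, of a b c d x, THEN FalseE]) (use mem dist p4 in \<open>auto simp: sy\<close>)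
    subgoal by (simp add: T_defs)
    subgoal by (rule no_house[OF cl, of b a x d c, THEN FalseE]) (use mem dist p4 in \<open>auto simp: sy\<close>)
    subgoal by (simp add: T_defs)
    subgoal by (rule no_house[OF cl, of c d x a b, THEN FalseE]) (use mem dist p4 in \<open>auto simp: sy\<close>)
    subgoal by (simp add: T_defs)
    subgoal by (rule no_C5[OF cl, of a b c d x, THEN FalseE]) (use mem dist p4 in \<open>auto simp: sy\<close>)
    subgoal by (rule no_P5[OF cl, of d b x c a, THEN FalseE]) (use mem dist p4 in \<open>auto simp: sy\<close>)
    subgoal by (simp add: T_defs)
    subgoal by (simp add: T_defs)
    subgoal by (simp add: T_defs)
    subgoal by (simp add: T_defs)
    subgoal by (simp add: T_defs)
    subgoal by (simp add: T_defs)
    subgoal by (rule no_P5[OF cl, of a c x b d, THEN FalseE]) (use mem dist p4 in \<open>auto simp: sy\<close>)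
    subgoal by (rule no_cogem[OF cl, of b d a c x, THEN FalseE]) (use mem dist p4 in \<open>auto simp: sy\<close>)
    done
qed

lemma six:
  assumes cl: "cls V R" and mem: "a\<in>V" "b\<in>V" "c\<in>V" "d\<in>V" "x\<in>V" "y\<in>V"
    and dist: "distinct [a,b,c,d,x,y]"
    and p4: "R a b" "R b c" "R c d" "\<not>R a c" "\<not>R a d" "\<not>R b d"
  shows "(TA R a b c d x \<and> \<not>TA R a b c d y \<longrightarrow> (R x y \<longleftrightarrow> R a y)) \<and> (TB R a b c d x \<and> \<not>TB R a b c d y \<longrightarrow> (R x y \<longleftrightarrow> R b y)) \<and> (TC R a b c d x \<and> \<not>TC R a b c d y \<longrightarrow> (R x y \<longleftrightarrow> R c y)) \<and> (TD R a b c d x \<and> \<not>TD R a b c d y \<longrightarrow> (R x y \<longleftrightarrow> R d y)) \<and> (TZ R a b c d x \<and> \<not>TZ R a b c d y \<longrightarrow> (R x y \<longleftrightarrow> TB R a b c d y \<or> TC R a b c d y))"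
proof -
  have s: "\<And>u w. u\<in>V \<Longrightarrow> w\<in>V \<Longrightarrow> R u w = R w u"
    using cl unfolding cls_def simple_graph_def by auto
  have sy: "R b a = R a b" "R c a = R a c" "R d a = R a d" "R x a = R a x" "R y a = R a y" "R c b = R b c" "R d b = R b d" "R x b = R b x" "R y b = R b y" "R d c = R c d" "R x c = R c x" "R y c = R c y" "R x d = R d x" "R y d = R d y" "R y x = R x y"
    using s mem by blast+
  show ?thesis
    apply (cases "R a x"; cases "R b x"; cases "R c x"; cases "R d x"; cases "R a y"; cases "R b y"; cases "R c y"; cases "R d y"; cases "R x y")
    subgoal by (simp add: T_defs)
    subgoal by (simp add: T_defs)
    subgoal by (simp add: T_defs)
    subgoal by (simp add: T_defs)
    subgoal by (simp add: T_defs)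
    subgoal by (simp add: T_defs)
    subgoal by (simp add: T_defs)
    subgoal by (simp add: T_defs)
    subgoal by (simp add: T_defs)
    subgoal by (simp add: T_defs)
    subgoal by (simp add: T_defs)
    subgoal by (simp add: T_defs)
    subgoal by (simp add: T_defs)
    subgoal by (simp add: T_defs)
    subgoal by (simp add: T_defs)
    subgoal by (simp add: T_defs)
    subgoal by (simp add: T_defs)
    subgoal by (simp add: T_defs)
    subgoal by (simp add: T_defs)
    subgoal by (simp add: T_defs)
    subgoal by (simp add: T_defs)
    subgoal by (simp add: T_defs)
    subgoal by (simp add: T_defs)
    subgoal by (simp add: T_defs)
    subgoal by (simp add: T_defs)
    subgoal by (simp add: T_defs)
    subgoal by (simp add: T_defs)
    subgoal by (simp add: T_defs)
    subgoal by (simp add: T_defs)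
    subgoal by (simp add: T_defs)
    subgoal by (simp add: T_defs)
    subgoal by (simp add: T_defs)
    subgoal by (simp add: T_defs)
    subgoal by (rule no_gem[OF cl, of a b c d y, THEN FalseE]) (use mem dist p4 in \<open>auto simp: sy\<close>)
    subgoal by (simp add: T_defs)
    subgoal by (simp add: T_defs)
    subgoal by (simp add: T_defs)
    subgoal by (rule no_house[OF cl, of b a y d c, THEN FalseE]) (use mem dist p4 in \<open>auto simp: sy\<close>)
    subgoal by (simp add: T_defs)
    subgoal by (rule no_gem[OF cl, of c x a y b, THEN FalseE]) (use mem dist p4 in \<open>auto simp: sy\<close>)
    subgoal by (rule no_house[OF cl, of c d y a b, THEN FalseE]) (use mem dist p4 in \<open>auto simp: sy\<close>)
    subgoal by (simp add: T_defs)
    subgoal by (simp add: T_defs)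
    subgoal by (simp add: T_defs)
    subgoal by (rule no_C5[OF cl, of a b c d y, THEN FalseE]) (use mem dist p4 in \<open>auto simp: sy\<close>)
    subgoal by (simp add: T_defs)
    subgoal by (rule no_P5[OF cl, of d b y c a, THEN FalseE]) (use mem dist p4 in \<open>auto simp: sy\<close>)
    subgoal by (simp add: T_defs)
    subgoal by (simp add: T_defs)
    subgoal by (rule no_gem[OF cl, of a x c y b, THEN FalseE]) (use mem dist p4 in \<open>auto simp: sy\<close>)
    subgoal by (simp add: T_defs)
    subgoal by (rule no_gem[OF cl, of a x c y b, THEN FalseE]) (use mem dist p4 in \<open>auto simp: sy\<close>)
    subgoal by (simp add: T_defs)
    subgoal by (rule no_P5[OF cl, of a c y x d, THEN FalseE]) (use mem dist p4 in \<open>auto simp: sy\<close>)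
    subgoal by (simp add: T_defs)
    subgoal by (rule no_cogem[OF cl, of c a d x y, THEN FalseE]) (use mem dist p4 in \<open>auto simp: sy\<close>)
    subgoal by (rule no_gem[OF cl, of a b c y x, THEN FalseE]) (use mem dist p4 in \<open>auto simp: sy\<close>)
    subgoal by (simp add: T_defs)
    subgoal by (rule no_gem[OF cl, of a b c y x, THEN FalseE]) (use mem dist p4 in \<open>auto simp: sy\<close>)
    subgoal by (simp add: T_defs)
    subgoal by (rule no_P5[OF cl, of a c y b d, THEN FalseE]) (use mem dist p4 in \<open>auto simp: sy\<close>)
    subgoal by (simp add: T_defs)
    subgoal by (rule no_cogem[OF cl, of b d a c y, THEN FalseE]) (use mem dist p4 in \<open>auto simp: sy\<close>)
    subgoal by (simp add: T_defs)
    subgoal by (simp add: T_defs)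
    subgoal by (simp add: T_defs)
    subgoal by (simp add: T_defs)
    subgoal by (simp add: T_defs)
    subgoal by (simp add: T_defs)
    subgoal by (simp add: T_defs)
    subgoal by (simp add: T_defs)
    subgoal by (simp add: T_defs)
    subgoal by (simp add: T_defs)
    subgoal by (simp add: T_defs)
    subgoal by (simp add: T_defs)
    subgoal by (simp add: T_defs)
    subgoal by (simp add: T_defs)
    subgoal by (simp add: T_defs)
    subgoal by (simp add: T_defs)
    subgoal by (simp add: T_defs)
    subgoal by (simp add: T_defs)
    subgoal by (simp add: T_defs)
    subgoal by (simp add: T_defs)
    subgoal by (simp add: T_defs)
    subgoal by (simp add: T_defs)
    subgoal by (simp add: T_defs)
    subgoal by (simp add: T_defs)
    subgoal by (simp add: T_defs)
    subgoal by (simp add: T_defs)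
    subgoal by (simp add: T_defs)
    subgoal by (simp add: T_defs)
    subgoal by (simp add: T_defs)
    subgoal by (simp add: T_defs)
    subgoal by (simp add: T_defs)
    subgoal by (simp add: T_defs)
    subgoal by (simp add: T_defs)
    subgoal by (simp add: T_defs)
    subgoal by (rule no_gem[OF cl, of a b c d y, THEN FalseE]) (use mem dist p4 in \<open>auto simp: sy\<close>)
    subgoal by (simp add: T_defs)
    subgoal by (rule no_gem[OF cl, of c y a x b, THEN FalseE]) (use mem dist p4 in \<open>auto simp: sy\<close>)
    subgoal by (simp add: T_defs)
    subgoal by (rule no_house[OF cl, of b a y d c, THEN FalseE]) (use mem dist p4 in \<open>auto simp: sy\<close>)
    subgoal by (simp add: T_defs)
    subgoal by (simp add: T_defs)
    subgoal by (simp add: T_defs)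
    subgoal by (rule no_house[OF cl, of c d y a b, THEN FalseE]) (use mem dist p4 in \<open>auto simp: sy\<close>)
    subgoal by (simp add: T_defs)
    subgoal by (rule no_house[OF cl, of a x b c y, THEN FalseE]) (use mem dist p4 in \<open>auto simp: sy\<close>)
    subgoal by (simp add: T_defs)
    subgoal by (rule no_C5[OF cl, of a b c d y, THEN FalseE]) (use mem dist p4 in \<open>auto simp: sy\<close>)
    subgoal by (simp add: T_defs)
    subgoal by (rule no_P5[OF cl, of d b y c a, THEN FalseE]) (use mem dist p4 in \<open>auto simp: sy\<close>)
    subgoal by (rule no_gem[OF cl, of a x y c b, THEN FalseE]) (use mem dist p4 in \<open>auto simp: sy\<close>)
    subgoal by (simp add: T_defs)
    subgoal by (rule no_gem[OF cl, of a x y c b, THEN FalseE]) (use mem dist p4 in \<open>auto simp: sy\<close>)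
    subgoal by (simp add: T_defs)
    subgoal by (rule no_P5[OF cl, of a y c x d, THEN FalseE]) (use mem dist p4 in \<open>auto simp: sy\<close>)
    subgoal by (simp add: T_defs)
    subgoal by (simp add: T_defs)
    subgoal by (simp add: T_defs)
    subgoal by (rule no_house[OF cl, of b a x y c, THEN FalseE]) (use mem dist p4 in \<open>auto simp: sy\<close>)
    subgoal by (simp add: T_defs)
    subgoal by (rule no_house[OF cl, of b a x y c, THEN FalseE]) (use mem dist p4 in \<open>auto simp: sy\<close>)
    subgoal by (simp add: T_defs)
    subgoal by (rule no_P5[OF cl, of a c y b d, THEN FalseE]) (use mem dist p4 in \<open>auto simp: sy\<close>)
    subgoal by (simp add: T_defs)
    subgoal by (rule no_cogem[OF cl, of b d a c y, THEN FalseE]) (use mem dist p4 in \<open>auto simp: sy\<close>)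
    subgoal by (simp add: T_defs)
    subgoal by (simp add: T_defs)
    subgoal by (simp add: T_defs)
    subgoal by (simp add: T_defs)
    subgoal by (simp add: T_defs)
    subgoal by (simp add: T_defs)
    subgoal by (simp add: T_defs)
    subgoal by (simp add: T_defs)
    subgoal by (simp add: T_defs)
    subgoal by (simp add: T_defs)
    subgoal by (simp add: T_defs)
    subgoal by (simp add: T_defs)
    subgoal by (simp add: T_defs)
    subgoal by (simp add: T_defs)
    subgoal by (simp add: T_defs)
    subgoal by (simp add: T_defs)
    subgoal by (simp add: T_defs)
    subgoal by (simp add: T_defs)
    subgoal by (simp add: T_defs)
    subgoal by (simp add: T_defs)
    subgoal by (simp add: T_defs)
    subgoal by (simp add: T_defs)
    subgoal by (simp add: T_defs)
    subgoal by (simp add: T_defs)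
    subgoal by (simp add: T_defs)
    subgoal by (simp add: T_defs)
    subgoal by (simp add: T_defs)
    subgoal by (simp add: T_defs)
    subgoal by (simp add: T_defs)
    subgoal by (simp add: T_defs)
    subgoal by (simp add: T_defs)
    subgoal by (simp add: T_defs)
    subgoal by (simp add: T_defs)
    subgoal by (simp add: T_defs)
    subgoal by (rule no_gem[OF cl, of a b c d y, THEN FalseE]) (use mem dist p4 in \<open>auto simp: sy\<close>)
    subgoal by (simp add: T_defs)
    subgoal by (simp add: T_defs)
    subgoal by (simp add: T_defs)
    subgoal by (rule no_house[OF cl, of b a y d c, THEN FalseE]) (use mem dist p4 in \<open>auto simp: sy\<close>)
    subgoal by (simp add: T_defs)
    subgoal by (rule no_house[OF cl, of a y b c x, THEN FalseE]) (use mem dist p4 in \<open>auto simp: sy\<close>)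
    subgoal by (rule no_house[OF cl, of c d y a b, THEN FalseE]) (use mem dist p4 in \<open>auto simp: sy\<close>)
    subgoal by (simp add: T_defs)
    subgoal by (simp add: T_defs)
    subgoal by (simp add: T_defs)
    subgoal by (rule no_C5[OF cl, of a b c d y, THEN FalseE]) (use mem dist p4 in \<open>auto simp: sy\<close>)
    subgoal by (simp add: T_defs)
    subgoal by (rule no_P5[OF cl, of d b y c a, THEN FalseE]) (use mem dist p4 in \<open>auto simp: sy\<close>)
    subgoal by (simp add: T_defs)
    subgoal by (simp add: T_defs)
    subgoal by (rule no_house[OF cl, of b y c x a, THEN FalseE]) (use mem dist p4 in \<open>auto simp: sy\<close>)
    subgoal by (simp add: T_defs)
    subgoal by (rule no_house[OF cl, of b y c x a, THEN FalseE]) (use mem dist p4 in \<open>auto simp: sy\<close>)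
    subgoal by (simp add: T_defs)
    subgoal by (rule no_P5[OF cl, of d b x y a, THEN FalseE]) (use mem dist p4 in \<open>auto simp: sy\<close>)
    subgoal by (simp add: T_defs)
    subgoal by (rule no_cogem[OF cl, of a y x b d, THEN FalseE]) (use mem dist p4 in \<open>auto simp: sy\<close>)
    subgoal by (rule no_house[OF cl, of c y x a b, THEN FalseE]) (use mem dist p4 in \<open>auto simp: sy\<close>)
    subgoal by (simp add: T_defs)
    subgoal by (rule no_house[OF cl, of c y x a b, THEN FalseE]) (use mem dist p4 in \<open>auto simp: sy\<close>)
    subgoal by (simp add: T_defs)
    subgoal by (rule no_P5[OF cl, of a c y b d, THEN FalseE]) (use mem dist p4 in \<open>auto simp: sy\<close>)
    subgoal by (simp add: T_defs)
    subgoal by (rule no_cogem[OF cl, of b d a c y, THEN FalseE]) (use mem dist p4 in \<open>auto simp: sy\<close>)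
    subgoal by (simp add: T_defs)
    subgoal by (simp add: T_defs)
    subgoal by (simp add: T_defs)
    subgoal by (simp add: T_defs)
    subgoal by (simp add: T_defs)
    subgoal by (simp add: T_defs)
    subgoal by (simp add: T_defs)
    subgoal by (simp add: T_defs)
    subgoal by (simp add: T_defs)
    subgoal by (simp add: T_defs)
    subgoal by (simp add: T_defs)
    subgoal by (simp add: T_defs)
    subgoal by (simp add: T_defs)
    subgoal by (simp add: T_defs)
    subgoal by (simp add: T_defs)
    subgoal by (simp add: T_defs)
    subgoal by (simp add: T_defs)
    subgoal by (simp add: T_defs)
    subgoal by (simp add: T_defs)
    subgoal by (simp add: T_defs)
    subgoal by (simp add: T_defs)
    subgoal by (simp add: T_defs)
    subgoal by (simp add: T_defs)
    subgoal by (simp add: T_defs)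
    subgoal by (simp add: T_defs)
    subgoal by (simp add: T_defs)
    subgoal by (simp add: T_defs)
    subgoal by (simp add: T_defs)
    subgoal by (simp add: T_defs)
    subgoal by (simp add: T_defs)
    subgoal by (simp add: T_defs)
    subgoal by (simp add: T_defs)
    subgoal by (simp add: T_defs)
    subgoal by (simp add: T_defs)
    subgoal by (simp add: T_defs)
    subgoal by (simp add: T_defs)
    subgoal by (simp add: T_defs)
    subgoal by (simp add: T_defs)
    subgoal by (simp add: T_defs)
    subgoal by (simp add: T_defs)
    subgoal by (simp add: T_defs)
    subgoal by (simp add: T_defs)
    subgoal by (simp add: T_defs)
    subgoal by (simp add: T_defs)
    subgoal by (simp add: T_defs)
    subgoal by (simp add: T_defs)
    subgoal by (simp add: T_defs)
    subgoal by (simp add: T_defs)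
    subgoal by (simp add: T_defs)
    subgoal by (simp add: T_defs)
    subgoal by (simp add: T_defs)
    subgoal by (simp add: T_defs)
    subgoal by (simp add: T_defs)
    subgoal by (simp add: T_defs)
    subgoal by (simp add: T_defs)
    subgoal by (simp add: T_defs)
    subgoal by (simp add: T_defs)
    subgoal by (simp add: T_defs)
    subgoal by (simp add: T_defs)
    subgoal by (simp add: T_defs)
    subgoal by (simp add: T_defs)
    subgoal by (simp add: T_defs)
    subgoal by (simp add: T_defs)
    subgoal by (simp add: T_defs)
    subgoal by (simp add: T_defs)
    subgoal by (simp add: T_defs)
    subgoal by (rule no_gem[OF cl, of a b c d y, THEN FalseE]) (use mem dist p4 in \<open>auto simp: sy\<close>)
    subgoal by (simp add: T_defs)
    subgoal by (rule no_gem[OF cl, of a y c x b, THEN FalseE]) (use mem dist p4 in \<open>auto simp: sy\<close>)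
    subgoal by (rule no_house[OF cl, of b a y d c, THEN FalseE]) (use mem dist p4 in \<open>auto simp: sy\<close>)
    subgoal by (simp add: T_defs)
    subgoal by (rule no_gem[OF cl, of a y x c b, THEN FalseE]) (use mem dist p4 in \<open>auto simp: sy\<close>)
    subgoal by (simp add: T_defs)
    subgoal by (simp add: T_defs)
    subgoal by (rule no_house[OF cl, of c d y a b, THEN FalseE]) (use mem dist p4 in \<open>auto simp: sy\<close>)
    subgoal by (simp add: T_defs)
    subgoal by (rule no_house[OF cl, of b x c y a, THEN FalseE]) (use mem dist p4 in \<open>auto simp: sy\<close>)
    subgoal by (rule no_C5[OF cl, of a b c d y, THEN FalseE]) (use mem dist p4 in \<open>auto simp: sy\<close>)
    subgoal by (simp add: T_defs)
    subgoal by (rule no_P5[OF cl, of d b y c a, THEN FalseE]) (use mem dist p4 in \<open>auto simp: sy\<close>)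
    subgoal by (simp add: T_defs)
    subgoal by (simp add: T_defs)
    subgoal by (simp add: T_defs)
    subgoal by (simp add: T_defs)
    subgoal by (rule no_gem[OF cl, of d x b y c, THEN FalseE]) (use mem dist p4 in \<open>auto simp: sy\<close>)
    subgoal by (simp add: T_defs)
    subgoal by (simp add: T_defs)
    subgoal by (rule no_gem[OF cl, of d c b y x, THEN FalseE]) (use mem dist p4 in \<open>auto simp: sy\<close>)
    subgoal by (simp add: T_defs)
    subgoal by (simp add: T_defs)
    subgoal by (rule no_P5[OF cl, of a x y b d, THEN FalseE]) (use mem dist p4 in \<open>auto simp: sy\<close>)
    subgoal by (simp add: T_defs)
    subgoal by (rule no_cogem[OF cl, of b d a x y, THEN FalseE]) (use mem dist p4 in \<open>auto simp: sy\<close>)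
    subgoal by (rule no_P5[OF cl, of a c y b d, THEN FalseE]) (use mem dist p4 in \<open>auto simp: sy\<close>)
    subgoal by (simp add: T_defs)
    subgoal by (rule no_cogem[OF cl, of b d a c y, THEN FalseE]) (use mem dist p4 in \<open>auto simp: sy\<close>)
    subgoal by (simp add: T_defs)
    subgoal by (rule no_gem[OF cl, of a b c d y, THEN FalseE]) (use mem dist p4 in \<open>auto simp: sy\<close>)
    subgoal by (simp add: T_defs)
    subgoal by (simp add: T_defs)
    subgoal by (rule no_gem[OF cl, of a y c x b, THEN FalseE]) (use mem dist p4 in \<open>auto simp: sy\<close>)
    subgoal by (rule no_house[OF cl, of b a y d c, THEN FalseE]) (use mem dist p4 in \<open>auto simp: sy\<close>)
    subgoal by (simp add: T_defs)
    subgoal by (rule no_gem[OF cl, of a y x c b, THEN FalseE]) (use mem dist p4 in \<open>auto simp: sy\<close>)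
    subgoal by (simp add: T_defs)
    subgoal by (rule no_house[OF cl, of c d y a b, THEN FalseE]) (use mem dist p4 in \<open>auto simp: sy\<close>)
    subgoal by (simp add: T_defs)
    subgoal by (simp add: T_defs)
    subgoal by (rule no_house[OF cl, of b x c y a, THEN FalseE]) (use mem dist p4 in \<open>auto simp: sy\<close>)
    subgoal by (rule no_C5[OF cl, of a b c d y, THEN FalseE]) (use mem dist p4 in \<open>auto simp: sy\<close>)
    subgoal by (simp add: T_defs)
    subgoal by (rule no_P5[OF cl, of d b y c a, THEN FalseE]) (use mem dist p4 in \<open>auto simp: sy\<close>)
    subgoal by (simp add: T_defs)
    subgoal by (simp add: T_defs)
    subgoal by (rule no_gem[OF cl, of d y b x c, THEN FalseE]) (use mem dist p4 in \<open>auto simp: sy\<close>)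
    subgoal by (simp add: T_defs)
    subgoal by (simp add: T_defs)
    subgoal by (simp add: T_defs)
    subgoal by (rule no_cogem[OF cl, of c y x d a, THEN FalseE]) (use mem dist p4 in \<open>auto simp: sy\<close>)
    subgoal by (rule no_cogem[OF cl, of c y d x a, THEN FalseE]) (use mem dist p4 in \<open>auto simp: sy\<close>)
    subgoal by (simp add: T_defs)
    subgoal by (rule no_P5[OF cl, of a x d b y, THEN FalseE]) (use mem dist p4 in \<open>auto simp: sy\<close>)
    subgoal by (simp add: T_defs)
    subgoal by (rule no_cogem[OF cl, of b y a x d, THEN FalseE]) (use mem dist p4 in \<open>auto simp: sy\<close>)
    subgoal by (simp add: T_defs)
    subgoal by (rule no_P5[OF cl, of a c y b d, THEN FalseE]) (use mem dist p4 in \<open>auto simp: sy\<close>)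
    subgoal by (simp add: T_defs)
    subgoal by (rule no_cogem[OF cl, of b d a c y, THEN FalseE]) (use mem dist p4 in \<open>auto simp: sy\<close>)
    subgoal by (simp add: T_defs)
    subgoal by (simp add: T_defs)
    subgoal by (rule no_gem[OF cl, of a b c d y, THEN FalseE]) (use mem dist p4 in \<open>auto simp: sy\<close>)
    subgoal by (simp add: T_defs)
    subgoal by (rule no_P5[OF cl, of a c x y d, THEN FalseE]) (use mem dist p4 in \<open>auto simp: sy\<close>)
    subgoal by (rule no_house[OF cl, of b a y d c, THEN FalseE]) (use mem dist p4 in \<open>auto simp: sy\<close>)
    subgoal by (simp add: T_defs)
    subgoal by (rule no_P5[OF cl, of a x c y d, THEN FalseE]) (use mem dist p4 in \<open>auto simp: sy\<close>)
    subgoal by (simp add: T_defs)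
    subgoal by (simp add: T_defs)
    subgoal by (rule no_house[OF cl, of c d y a b, THEN FalseE]) (use mem dist p4 in \<open>auto simp: sy\<close>)
    subgoal by (simp add: T_defs)
    subgoal by (rule no_P5[OF cl, of d b y x a, THEN FalseE]) (use mem dist p4 in \<open>auto simp: sy\<close>)
    subgoal by (rule no_C5[OF cl, of a b c d y, THEN FalseE]) (use mem dist p4 in \<open>auto simp: sy\<close>)
    subgoal by (simp add: T_defs)
    subgoal by (rule no_P5[OF cl, of d b y c a, THEN FalseE]) (use mem dist p4 in \<open>auto simp: sy\<close>)
    subgoal by (simp add: T_defs)
    subgoal by (simp add: T_defs)
    subgoal by (simp add: T_defs)
    subgoal by (simp add: T_defs)
    subgoal by (rule no_cogem[OF cl, of c x y d a, THEN FalseE]) (use mem dist p4 in \<open>auto simp: sy\<close>)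
    subgoal by (simp add: T_defs)
    subgoal by (simp add: T_defs)
    subgoal by (rule no_cogem[OF cl, of d y c x a, THEN FalseE]) (use mem dist p4 in \<open>auto simp: sy\<close>)
    subgoal by (simp add: T_defs)
    subgoal by (simp add: T_defs)
    subgoal by (rule no_P5[OF cl, of a x y b d, THEN FalseE]) (use mem dist p4 in \<open>auto simp: sy\<close>)
    subgoal by (simp add: T_defs)
    subgoal by (rule no_cogem[OF cl, of b d a x y, THEN FalseE]) (use mem dist p4 in \<open>auto simp: sy\<close>)
    subgoal by (rule no_P5[OF cl, of a c y b d, THEN FalseE]) (use mem dist p4 in \<open>auto simp: sy\<close>)
    subgoal by (simp add: T_defs)
    subgoal by (rule no_cogem[OF cl, of b d a c y, THEN FalseE]) (use mem dist p4 in \<open>auto simp: sy\<close>)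
    subgoal by (simp add: T_defs)
    subgoal by (simp add: T_defs)
    subgoal by (rule no_gem[OF cl, of a b c d y, THEN FalseE]) (use mem dist p4 in \<open>auto simp: sy\<close>)
    subgoal by (simp add: T_defs)
    subgoal by (rule no_cogem[OF cl, of c a d y x, THEN FalseE]) (use mem dist p4 in \<open>auto simp: sy\<close>)
    subgoal by (simp add: T_defs)
    subgoal by (rule no_house[OF cl, of b a y d c, THEN FalseE]) (use mem dist p4 in \<open>auto simp: sy\<close>)
    subgoal by (simp add: T_defs)
    subgoal by (simp add: T_defs)
    subgoal by (simp add: T_defs)
    subgoal by (rule no_house[OF cl, of c d y a b, THEN FalseE]) (use mem dist p4 in \<open>auto simp: sy\<close>)
    subgoal by (simp add: T_defs)
    subgoal by (rule no_cogem[OF cl, of a x y b d, THEN FalseE]) (use mem dist p4 in \<open>auto simp: sy\<close>)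
    subgoal by (simp add: T_defs)
    subgoal by (rule no_C5[OF cl, of a b c d y, THEN FalseE]) (use mem dist p4 in \<open>auto simp: sy\<close>)
    subgoal by (simp add: T_defs)
    subgoal by (rule no_P5[OF cl, of d b y c a, THEN FalseE]) (use mem dist p4 in \<open>auto simp: sy\<close>)
    subgoal by (rule no_gem[OF cl, of d c b x y, THEN FalseE]) (use mem dist p4 in \<open>auto simp: sy\<close>)
    subgoal by (simp add: T_defs)
    subgoal by (rule no_cogem[OF cl, of c x d y a, THEN FalseE]) (use mem dist p4 in \<open>auto simp: sy\<close>)
    subgoal by (simp add: T_defs)
    subgoal by (rule no_cogem[OF cl, of d x c y a, THEN FalseE]) (use mem dist p4 in \<open>auto simp: sy\<close>)
    subgoal by (simp add: T_defs)
    subgoal by (simp add: T_defs)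
    subgoal by (simp add: T_defs)
    subgoal by (rule no_P5[OF cl, of a x d b y, THEN FalseE]) (use mem dist p4 in \<open>auto simp: sy\<close>)
    subgoal by (simp add: T_defs)
    subgoal by (rule no_cogem[OF cl, of b y a x d, THEN FalseE]) (use mem dist p4 in \<open>auto simp: sy\<close>)
    subgoal by (simp add: T_defs)
    subgoal by (rule no_P5[OF cl, of a c y b d, THEN FalseE]) (use mem dist p4 in \<open>auto simp: sy\<close>)
    subgoal by (simp add: T_defs)
    subgoal by (rule no_cogem[OF cl, of b d a c y, THEN FalseE]) (use mem dist p4 in \<open>auto simp: sy\<close>)
    subgoal by (simp add: T_defs)
    subgoal by (simp add: T_defs)
    subgoal by (rule no_gem[OF cl, of a b c d y, THEN FalseE]) (use mem dist p4 in \<open>auto simp: sy\<close>)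
    subgoal by (rule no_gem[OF cl, of a b c x y, THEN FalseE]) (use mem dist p4 in \<open>auto simp: sy\<close>)
    subgoal by (simp add: T_defs)
    subgoal by (simp add: T_defs)
    subgoal by (rule no_house[OF cl, of b a y d c, THEN FalseE]) (use mem dist p4 in \<open>auto simp: sy\<close>)
    subgoal by (rule no_house[OF cl, of b a y x c, THEN FalseE]) (use mem dist p4 in \<open>auto simp: sy\<close>)
    subgoal by (simp add: T_defs)
    subgoal by (simp add: T_defs)
    subgoal by (rule no_house[OF cl, of c d y a b, THEN FalseE]) (use mem dist p4 in \<open>auto simp: sy\<close>)
    subgoal by (rule no_house[OF cl, of c x y a b, THEN FalseE]) (use mem dist p4 in \<open>auto simp: sy\<close>)
    subgoal by (simp add: T_defs)
    subgoal by (simp add: T_defs)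
    subgoal by (rule no_C5[OF cl, of a b c d y, THEN FalseE]) (use mem dist p4 in \<open>auto simp: sy\<close>)
    subgoal by (rule no_P5[OF cl, of d b y c a, THEN FalseE]) (use mem dist p4 in \<open>auto simp: sy\<close>)
    subgoal by (simp add: T_defs)
    subgoal by (simp add: T_defs)
    subgoal by (rule no_P5[OF cl, of a y x b d, THEN FalseE]) (use mem dist p4 in \<open>auto simp: sy\<close>)
    subgoal by (rule no_P5[OF cl, of a y d b x, THEN FalseE]) (use mem dist p4 in \<open>auto simp: sy\<close>)
    subgoal by (simp add: T_defs)
    subgoal by (simp add: T_defs)
    subgoal by (rule no_P5[OF cl, of a y x b d, THEN FalseE]) (use mem dist p4 in \<open>auto simp: sy\<close>)
    subgoal by (rule no_P5[OF cl, of a y d b x, THEN FalseE]) (use mem dist p4 in \<open>auto simp: sy\<close>)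
    subgoal by (simp add: T_defs)
    subgoal by (simp add: T_defs)
    subgoal by (simp add: T_defs)
    subgoal by (simp add: T_defs)
    subgoal by (simp add: T_defs)
    subgoal by (simp add: T_defs)
    subgoal by (rule no_P5[OF cl, of a c y b d, THEN FalseE]) (use mem dist p4 in \<open>auto simp: sy\<close>)
    subgoal by (rule no_cogem[OF cl, of b d a c y, THEN FalseE]) (use mem dist p4 in \<open>auto simp: sy\<close>)
    subgoal by (simp add: T_defs)
    subgoal by (simp add: T_defs)
    subgoal by (rule no_gem[OF cl, of a b c d y, THEN FalseE]) (use mem dist p4 in \<open>auto simp: sy\<close>)
    subgoal by (rule no_gem[OF cl, of a b c x y, THEN FalseE]) (use mem dist p4 in \<open>auto simp: sy\<close>)
    subgoal by (simp add: T_defs)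
    subgoal by (simp add: T_defs)
    subgoal by (rule no_house[OF cl, of b a y d c, THEN FalseE]) (use mem dist p4 in \<open>auto simp: sy\<close>)
    subgoal by (rule no_house[OF cl, of b a y x c, THEN FalseE]) (use mem dist p4 in \<open>auto simp: sy\<close>)
    subgoal by (simp add: T_defs)
    subgoal by (simp add: T_defs)
    subgoal by (rule no_house[OF cl, of c d y a b, THEN FalseE]) (use mem dist p4 in \<open>auto simp: sy\<close>)
    subgoal by (rule no_house[OF cl, of c x y a b, THEN FalseE]) (use mem dist p4 in \<open>auto simp: sy\<close>)
    subgoal by (simp add: T_defs)
    subgoal by (simp add: T_defs)
    subgoal by (rule no_C5[OF cl, of a b c d y, THEN FalseE]) (use mem dist p4 in \<open>auto simp: sy\<close>)
    subgoal by (rule no_P5[OF cl, of d b y c a, THEN FalseE]) (use mem dist p4 in \<open>auto simp: sy\<close>)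
    subgoal by (simp add: T_defs)
    subgoal by (simp add: T_defs)
    subgoal by (rule no_cogem[OF cl, of b d a y x, THEN FalseE]) (use mem dist p4 in \<open>auto simp: sy\<close>)
    subgoal by (rule no_cogem[OF cl, of b x a y d, THEN FalseE]) (use mem dist p4 in \<open>auto simp: sy\<close>)
    subgoal by (simp add: T_defs)
    subgoal by (simp add: T_defs)
    subgoal by (rule no_cogem[OF cl, of b d a y x, THEN FalseE]) (use mem dist p4 in \<open>auto simp: sy\<close>)
    subgoal by (rule no_cogem[OF cl, of b x a y d, THEN FalseE]) (use mem dist p4 in \<open>auto simp: sy\<close>)
    subgoal by (simp add: T_defs)
    subgoal by (simp add: T_defs)
    subgoal by (simp add: T_defs)
    subgoal by (simp add: T_defs)
    subgoal by (simp add: T_defs)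
    subgoal by (simp add: T_defs)
    subgoal by (rule no_P5[OF cl, of a c y b d, THEN FalseE]) (use mem dist p4 in \<open>auto simp: sy\<close>)
    subgoal by (rule no_cogem[OF cl, of b d a c y, THEN FalseE]) (use mem dist p4 in \<open>auto simp: sy\<close>)
    subgoal by (simp add: T_defs)
    subgoal by (simp add: T_defs)
    subgoal by (simp add: T_defs)
    subgoal by (simp add: T_defs)
    subgoal by (simp add: T_defs)
    subgoal by (simp add: T_defs)
    subgoal by (simp add: T_defs)
    subgoal by (simp add: T_defs)
    subgoal by (simp add: T_defs)
    subgoal by (simp add: T_defs)
    subgoal by (simp add: T_defs)
    subgoal by (simp add: T_defs)
    subgoal by (simp add: T_defs)
    subgoal by (simp add: T_defs)
    subgoal by (simp add: T_defs)
    subgoal by (simp add: T_defs)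
    subgoal by (simp add: T_defs)
    subgoal by (simp add: T_defs)
    subgoal by (simp add: T_defs)
    subgoal by (simp add: T_defs)
    subgoal by (simp add: T_defs)
    subgoal by (simp add: T_defs)
    subgoal by (simp add: T_defs)
    subgoal by (simp add: T_defs)
    subgoal by (simp add: T_defs)
    subgoal by (simp add: T_defs)
    subgoal by (simp add: T_defs)
    subgoal by (simp add: T_defs)
    subgoal by (simp add: T_defs)
    subgoal by (simp add: T_defs)
    subgoal by (simp add: T_defs)
    subgoal by (simp add: T_defs)
    subgoal by (simp add: T_defs)
    subgoal by (simp add: T_defs)
    subgoal by (simp add: T_defs)
    subgoal by (simp add: T_defs)
    subgoal by (simp add: T_defs)
    subgoal by (simp add: T_defs)
    subgoal by (simp add: T_defs)
    subgoal by (simp add: T_defs)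
    subgoal by (simp add: T_defs)
    subgoal by (simp add: T_defs)
    subgoal by (simp add: T_defs)
    subgoal by (simp add: T_defs)
    subgoal by (simp add: T_defs)
    subgoal by (simp add: T_defs)
    subgoal by (simp add: T_defs)
    subgoal by (simp add: T_defs)
    subgoal by (simp add: T_defs)
    subgoal by (simp add: T_defs)
    subgoal by (simp add: T_defs)
    subgoal by (simp add: T_defs)
    subgoal by (simp add: T_defs)
    subgoal by (simp add: T_defs)
    subgoal by (simp add: T_defs)
    subgoal by (simp add: T_defs)
    subgoal by (simp add: T_defs)
    subgoal by (simp add: T_defs)
    subgoal by (simp add: T_defs)
    subgoal by (simp add: T_defs)
    subgoal by (simp add: T_defs)
    subgoal by (simp add: T_defs)
    subgoal by (simp add: T_defs)
    subgoal by (simp add: T_defs)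
    subgoal by (simp add: T_defs)
    done
qed

lemma modA:
  assumes cl: "cls V R" and mem: "a\<in>V" "b\<in>V" "c\<in>V" "d\<in>V" and dist: "distinct [a,b,c,d]"
    and p4: "R a b" "R b c" "R c d" "\<not>R a c" "\<not>R a d" "\<not>R b d"
    and u: "u \<in> V" "u \<notin> {b,c,d}" "TA R a b c d u"
    and t: "t \<in> V" "\<not> (t \<notin> {b,c,d} \<and> TA R a b c d t)"
  shows "R u t = R a t"
proof -
  have s: "\<And>x y. x\<in>V \<Longrightarrow> y\<in>V \<Longrightarrow> R x y = R y x"
    using cl unfolding cls_def simple_graph_def by auto
  have sy: "R u a = R a u" "R t a = R a t" "R u b = R b u" "R t b = R b t" "R u c = R c u" "R t c = R c t" "R u d = R d u" "R t d = R d t" "R b a = R a b" "R c a = R a c" "R d a = R a d" "R c b = R b c" "R d b = R b d" "R d c = R c d" using s mem u(1) t(1) by blast+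
  show ?thesis
  proof (cases "u = a")
    case True then show ?thesis by simp
  next
    case up: False
    show ?thesis
    proof (cases "t \<in> {a,b,c,d}")
      case True
      then show ?thesis using u t p4 dist up by (auto simp: T_defs sy)
    next
      case False
      have tu: "t \<noteq> u" using u t False by auto
      have "distinct [a,b,c,d,u,t]" using dist u up False tu by auto
      from six[OF cl mem u(1) t(1) this p4] show ?thesis using u t False by auto
    qed
  qed
qed

lemma modB:
  assumes cl: "cls V R" and mem: "a\<in>V" "b\<in>V" "c\<in>V" "d\<in>V" and dist: "distinct [a,b,c,d]"
    and p4: "R a b" "R b c" "R c d" "\<not>R a c" "\<not>R a d" "\<not>R b d"
    and u: "u \<in> V" "u \<notin> {a,c,d}" "TB R a b c d u"
    and t: "t \<in> V" "\<not> (t \<notin> {a,c,d} \<and> TB R a b c d t)"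
  shows "R u t = R b t"
proof -
  have s: "\<And>x y. x\<in>V \<Longrightarrow> y\<in>V \<Longrightarrow> R x y = R y x"
    using cl unfolding cls_def simple_graph_def by auto
  have sy: "R u a = R a u" "R t a = R a t" "R u b = R b u" "R t b = R b t" "R u c = R c u" "R t c = R c t" "R u d = R d u" "R t d = R d t" "R b a = R a b" "R c a = R a c" "R d a = R a d" "R c b = R b c" "R d b = R b d" "R d c = R c d" using s mem u(1) t(1) by blast+
  show ?thesis
  proof (cases "u = b")
    case True then show ?thesis by simp
  next
    case up: False
    show ?thesis
    proof (cases "t \<in> {a,b,c,d}")
      case True
      then show ?thesis using u t p4 dist up by (auto simp: T_defs sy)
    next
      case False
      have tu: "t \<noteq> u" using u t False by auto
      have "distinct [a,b,c,d,u,t]" using dist u up False tu by auto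
      from six[OF cl mem u(1) t(1) this p4] show ?thesis using u t False by auto
    qed
  qed
qed

lemma modC:
  assumes cl: "cls V R" and mem: "a\<in>V" "b\<in>V" "c\<in>V" "d\<in>V" and dist: "distinct [a,b,c,d]"
    and p4: "R a b" "R b c" "R c d" "\<not>R a c" "\<not>R a d" "\<not>R b d"
    and u: "u \<in> V" "u \<notin> {a,b,d}" "TC R a b c d u"
    and t: "t \<in> V" "\<not> (t \<notin> {a,b,d} \<and> TC R a b c d t)"
  shows "R u t = R c t"
proof -
  have s: "\<And>x y. x\<in>V \<Longrightarrow> y\<in>V \<Longrightarrow> R x y = R y x"
    using cl unfolding cls_def simple_graph_def by auto
  have sy: "R u a = R a u" "R t a = R a t" "R u b = R b u" "R t b = R b t" "R u c = R c u" "R t c = R c t" "R u d = R d u" "R t d = R d t" "R b a = R a b" "R c a = R a c" "R d a = R a d" "R c b = R b c" "R d b = R b d" "R d c = R c d" using s mem u(1) t(1) by blast+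
  show ?thesis
  proof (cases "u = c")
    case True then show ?thesis by simp
  next
    case up: False
    show ?thesis
    proof (cases "t \<in> {a,b,c,d}")
      case True
      then show ?thesis using u t p4 dist up by (auto simp: T_defs sy)
    next
      case False
      have tu: "t \<noteq> u" using u t False by auto
      have "distinct [a,b,c,d,u,t]" using dist u up False tu by auto
      from six[OF cl mem u(1) t(1) this p4] show ?thesis using u t False by auto
    qed
  qed
qed

lemma modD:
  assumes cl: "cls V R" and mem: "a\<in>V" "b\<in>V" "c\<in>V" "d\<in>V" and dist: "distinct [a,b,c,d]"
    and p4: "R a b" "R b c" "R c d" "\<not>R a c" "\<not>R a d" "\<not>R b d"
    and u: "u \<in> V" "u \<notin> {a,b,c}" "TD R a b c d u"
    and t: "t \<in> V" "\<not> (t \<notin> {a,b,c} \<and> TD R a b c d t)"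
  shows "R u t = R d t"
proof -
  have s: "\<And>x y. x\<in>V \<Longrightarrow> y\<in>V \<Longrightarrow> R x y = R y x"
    using cl unfolding cls_def simple_graph_def by auto
  have sy: "R u a = R a u" "R t a = R a t" "R u b = R b u" "R t b = R b t" "R u c = R c u" "R t c = R c t" "R u d = R d u" "R t d = R d t" "R b a = R a b" "R c a = R a c" "R d a = R a d" "R c b = R b c" "R d b = R b d" "R d c = R c d" using s mem u(1) t(1) by blast+
  show ?thesis
  proof (cases "u = d")
    case True then show ?thesis by simp
  next
    case up: False
    show ?thesis
    proof (cases "t \<in> {a,b,c,d}")
      case True
      then show ?thesis using u t p4 dist up by (auto simp: T_defs sy)
    next
      case False
      have tu: "t \<noteq> u" using u t False by auto
      have "distinct [a,b,c,d,u,t]" using dist u up False tu by auto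
      from six[OF cl mem u(1) t(1) this p4] show ?thesis using u t False by auto
    qed
  qed
qed

lemma modZ:
  assumes cl: "cls V R" and mem: "a\<in>V" "b\<in>V" "c\<in>V" "d\<in>V" and dist: "distinct [a,b,c,d]"
    and p4: "R a b" "R b c" "R c d" "\<not>R a c" "\<not>R a d" "\<not>R b d"
    and u: "u \<in> V" "u \<notin> {a,b,c,d}" "TZ R a b c d u"
    and t: "t \<in> V" "\<not> (t \<notin> {a,b,c,d} \<and> TZ R a b c d t)"
  shows "R u t = (if t \<in> {a,b,c,d} then t = b \<or> t = c else TB R a b c d t \<or> TC R a b c d t)"
proof -
  have s: "\<And>x y. x\<in>V \<Longrightarrow> y\<in>V \<Longrightarrow> R x y = R y x"
    using cl unfolding cls_def simple_graph_def by auto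
  have sy: "R u a = R a u" "R t a = R a t" "R u b = R b u" "R t b = R b t" "R u c = R c u" "R t c = R c t" "R u d = R d u" "R t d = R d t" using s mem u(1) t(1) by blast+
  show ?thesis
  proof (cases "t \<in> {a,b,c,d}")
    case True
    then show ?thesis using u t p4 dist by (auto simp: T_defs sy)
  next
    case False
    have tu: "t \<noteq> u" using u t False by auto
    have "distinct [a,b,c,d,u,t]" using dist u False tu by auto
    from six[OF cl mem u(1) t(1) this p4] show ?thesis using u t False by auto
  qed
qed

definition reach :: "'a set \<Rightarrow> ('a \<Rightarrow> 'a \<Rightarrow> bool) \<Rightarrow> 'a \<Rightarrow> 'a \<Rightarrow> bool" where
  "reach V R = (\<lambda>a b. a \<in> V \<and> b \<in> V \<and> R a b)\<^sup>*\<^sup>*"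

definition conn :: "'a set \<Rightarrow> ('a \<Rightarrow> 'a \<Rightarrow> bool) \<Rightarrow> bool" where
  "conn V R \<longleftrightarrow> (\<forall>x\<in>V. \<forall>y\<in>V. reach V R x y)"

definition isP4 :: "'a set \<Rightarrow> ('a \<Rightarrow> 'a \<Rightarrow> bool) \<Rightarrow> 'a \<Rightarrow> 'a \<Rightarrow> 'a \<Rightarrow> 'a \<Rightarrow> bool" where
  "isP4 V R a b c d \<longleftrightarrow> a\<in>V \<and> b\<in>V \<and> c\<in>V \<and> d\<in>V \<and> distinct [a,b,c,d] \<and>
     R a b \<and> R b c \<and> R c d \<and> \<not>R a c \<and> \<not>R a d \<and> \<not>R b d"

lemma reach_refl: "reach V R x x" unfolding reach_def by simp

lemma reach_edge: "x\<in>V \<Longrightarrow> y\<in>V \<Longrightarrow> R x y \<Longrightarrow> reach V R x y"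
  unfolding reach_def by (rule r_into_rtranclp) simp

lemma reach_trans: "reach V R x y \<Longrightarrow> reach V R y z \<Longrightarrow> reach V R x z"
  unfolding reach_def by (rule rtranclp_trans)

lemma reach_sym:
  assumes "\<forall>x\<in>V. \<forall>y\<in>V. R x y \<longleftrightarrow> R y x" "reach V R x y" shows "reach V R y x"
  using assms(2) unfolding reach_def
proof (induction rule: rtranclp_induct)
  case base then show ?case by simp
next
  case (step y z)
  then have "(\<lambda>a b. a \<in> V \<and> b \<in> V \<and> R a b) z y" using assms(1) by auto
  then show ?case using step(3) by (rule converse_rtranclp_into_rtranclp)
qed

lemma reach_in: "reach V R x y \<Longrightarrow> x \<noteq> y \<Longrightarrow> x \<in> V \<and> y \<in> V"
  unfolding reach_def by (induction rule: rtranclp_induct) auto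

lemma reach_mono: "W \<subseteq> V \<Longrightarrow> reach W R x y \<Longrightarrow> reach V R x y"
  unfolding reach_def
  by (erule rtranclp_mono[THEN predicate2D, rotated]) auto

lemma reach_cong: "\<forall>x\<in>V. \<forall>y\<in>V. R x y = R' x y \<Longrightarrow> reach V R = reach V R'"
  unfolding reach_def
  by (rule arg_cong[where f=rtranclp]) (auto intro!: ext)

lemma conn_cong: "\<forall>x\<in>V. \<forall>y\<in>V. R x y = R' x y \<Longrightarrow> conn V R = conn V R'"
  unfolding conn_def using reach_cong by metis

lemma conn_nb:
  assumes "conn V R" "v \<in> V" "w \<in> V" "v \<noteq> w" "\<not> R v v"
  shows "\<exists>t\<in>V. R v t \<and> t \<noteq> v"
proof -
  have "reach V R v w" using assms unfolding conn_def by blast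
  then have "(\<lambda>a b. a \<in> V \<and> b \<in> V \<and> R a b)\<^sup>*\<^sup>* v w" unfolding reach_def .
  then show ?thesis using assms(4)
  proof (cases rule: converse_rtranclpE)
    case (step t) then show ?thesis
      using assms(5) by auto
  qed simp
qed

lemma L1:
  assumes "reach V R u t" "t = v" "u \<in> V - {v}"
  shows "\<exists>n. R n v \<and> n \<in> V - {v} \<and> reach (V - {v}) R u n"
  using assms unfolding reach_def
proof (induction rule: converse_rtranclp_induct)
  case base then show ?case by simp
next
  case (step u u')
  show ?case
  proof (cases "u' = v")
    case True then show ?thesis using step by (auto intro: rtranclp.rtrancl_refl)
  next
    case False
    then obtain n where n: "R n v" "n \<in> V - {v}" "(\<lambda>a b. a \<in> V - {v} \<and> b \<in> V - {v} \<and> R a b)\<^sup>*\<^sup>* u' n"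
      using step by blast
    have "(\<lambda>a b. a \<in> V - {v} \<and> b \<in> V - {v} \<and> R a b) u u'" using step(1,5) False by auto
    then have "(\<lambda>a b. a \<in> V - {v} \<and> b \<in> V - {v} \<and> R a b)\<^sup>*\<^sup>* u n"
      using n(3) by (rule converse_rtranclp_into_rtranclp)
    then show ?thesis using n(1,2) by blast
  qed
qed

lemma L2:
  assumes "reach W R p q" "P p" "\<not> P q"
  shows "\<exists>s t. s \<in> W \<and> t \<in> W \<and> R s t \<and> P s \<and> \<not> P t \<and> reach W R p s"
  using assms unfolding reach_def
proof (induction rule: rtranclp_induct)
  case base then show ?case by simp
next
  case (step y z)
  show ?case
  proof (cases "P y")
    case True then show ?thesis using step by blast
  next
    case False
    then obtain s t where "s \<in> W \<and> t \<in> W \<and> R s t \<and> P s \<and> \<not> P t \<and> (\<lambda>a b. a \<in> W \<and> b \<in> W \<and> R a b)\<^sup>*\<^sup>* p s"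
      using step by blast
    then show ?thesis by blast
  qed
qed

lemma keyK:
  assumes sg: "simple_graph V R" and cn: "conn V R" and v: "v \<in> V" and w: "w \<in> V" "w \<noteq> v" "\<not> R v w"
    and xy: "x \<in> V - {v}" "y \<in> V - {v}" "\<not> reach (V - {v}) R x y"
  shows "\<exists>a b c d. isP4 V R a b c d"
proof -
  let ?W = "V - {v}"
  have sym: "\<forall>x\<in>V. \<forall>y\<in>V. R x y \<longleftrightarrow> R y x" "\<forall>x\<in>V. \<not> R x x" using sg unfolding simple_graph_def by auto
  have symW: "\<forall>x\<in>?W. \<forall>y\<in>?W. R x y \<longleftrightarrow> R y x" using sym by auto
  have wW: "w \<in> ?W" using w by auto
  obtain y' where y': "y' \<in> ?W" "\<not> reach ?W R w y'"
  proof -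
    have "\<not> (reach ?W R w x \<and> reach ?W R w y)"
      using xy reach_sym[OF symW] reach_trans by metis
    then show ?thesis using that xy by blast
  qed
  have r1: "reach V R w v" "reach V R y' v" using cn w v y' unfolding conn_def by auto
  obtain n1 where n1: "R n1 v" "n1 \<in> ?W" "reach ?W R w n1" using L1[OF r1(1) HOL.refl] wW by blast
  obtain n2 where n2: "R n2 v" "n2 \<in> ?W" "reach ?W R y' n2" using L1[OF r1(2) HOL.refl] y' by blast
  have nr2: "\<not> reach ?W R w n2" using n2 y' reach_sym[OF symW] reach_trans by metis
  have "reach ?W R n1 w" using n1 reach_sym[OF symW] by blast
  then obtain s t where st: "s \<in> ?W" "t \<in> ?W" "R s t" "R v s" "\<not> R v t" "reach ?W R n1 s"
    using L2[of ?W R n1 w "\<lambda>s. R v s"] n1 sym w v by auto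
  have rs: "reach ?W R w s" using n1 st reach_trans by metis
  have rt: "reach ?W R w t" using rs st reach_trans reach_edge by metis
  have "\<not> R s n2" using rs nr2 reach_trans reach_edge st(1) n2(2) by metis
  moreover have "\<not> R t n2" using rt nr2 reach_trans reach_edge st(2) n2(2) by metis
  moreover have "t \<noteq> n2" using rt nr2 by blast
  moreover have "s \<noteq> n2" using rs nr2 by blast
  moreover have "t \<noteq> s" using st sym by auto
  ultimately have "isP4 V R t s v n2"
    unfolding isP4_def using st n2 v sym by auto
  then show ?thesis by blast
qed

lemma isP4_co:
  assumes "simple_graph V R" "isP4 V (complement_graph R) a b c d"
  shows "isP4 V R c a d b"
  using assms unfolding isP4_def simple_graph_def complement_graph_def by auto

lemma seinsche:
  "finite V \<Longrightarrow> card V \<ge> 2 \<Longrightarrow> simple_graph V R \<Longrightarrow> conn V R \<Longrightarrow> conn V (complement_graph R)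
   \<Longrightarrow> \<exists>a b c d. isP4 V R a b c d"
proof (induction "card V" arbitrary: V R rule: less_induct)
  case less
  obtain v where v: "v \<in> V" using less(3) by fastforce
  have "card (V - {v}) \<ge> 1" using less(2,3) v by (simp add: card_Diff_singleton)
  then obtain w where "w \<in> V - {v}" by (metis card.empty all_not_in_conv not_one_le_zero)
  then have w: "w \<in> V" "w \<noteq> v" by auto
  have irr: "\<not> R v v" using less(4) v unfolding simple_graph_def by auto
  obtain t where t: "t \<in> V" "R v t" "t \<noteq> v" using conn_nb[OF less(5) v w(1) w(2)[symmetric] irr] by blast
  obtain t' where t': "t' \<in> V" "complement_graph R v t'" "t' \<noteq> v"
    using conn_nb[OF less(6) v w(1) w(2)[symmetric]] unfolding complement_graph_def by blast
  have nt': "\<not> R v t'" using t' unfolding complement_graph_def by auto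
  have "t \<noteq> t'" using t(2) nt' by auto
  then have c3: "card V \<ge> 3"
  proof -
    have "{v, t, t'} \<subseteq> V" using v t t' by auto
    then have "card {v,t,t'} \<le> card V" using less(2) card_mono by blast
    then show ?thesis using \<open>t \<noteq> t'\<close> t(3) t'(3) by auto
  qed
  let ?W = "V - {v}"
  have cW: "card ?W < card V" "card ?W \<ge> 2" "finite ?W" using less(2) v c3 by (auto simp: card_Diff_singleton)
  have sW: "simple_graph ?W R" using less(4) unfolding simple_graph_def by auto
  show ?case
  proof (cases "conn ?W R \<and> conn ?W (complement_graph R)")
    case True
    then obtain a b c d where "isP4 ?W R a b c d" using less(1)[OF cW(1) cW(3) cW(2) sW] by blast
    then have "isP4 V R a b c d" unfolding isP4_def by auto
    then show ?thesis by blast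
  next
    case False
    show ?thesis
    proof (cases "conn ?W R")
      case False
      then obtain x y where "x \<in> ?W" "y \<in> ?W" "\<not> reach ?W R x y" unfolding conn_def by blast
      then show ?thesis using keyK[OF less(4) less(5) v t'(1) t'(3) nt'] by blast
    next
      case True
      then have "\<not> conn ?W (complement_graph R)" using False by blast
      then obtain x y where xy: "x \<in> ?W" "y \<in> ?W" "\<not> reach ?W (complement_graph R) x y" unfolding conn_def by blast
      have "\<not> complement_graph R v t" using t(2) unfolding complement_graph_def by auto
      then obtain a b c d where "isP4 V (complement_graph R) a b c d"
        using keyK[OF simple_co[OF less(4)] less(6) v t(1) t(3)] xy by blast
      then show ?thesis using isP4_co[OF less(4)] by blast
    qed
  qed
qed

definition twinfree :: "'a set \<Rightarrow> ('a \<Rightarrow> 'a \<Rightarrow> bool) \<Rightarrow> bool" where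
  "twinfree V R \<longleftrightarrow> (\<forall>u v. \<not> twins V R u v)"

lemma twinfree_co: "twinfree V (complement_graph R) = twinfree V R"
  unfolding twinfree_def using twins_co by metis

lemma comp_arg:
  fixes V :: "'a set" and R
  assumes IH: "\<And>(W::'a set) R'. card W < card V \<Longrightarrow> cls W R' \<Longrightarrow> twinfree W R' \<Longrightarrow> card W \<ge> 2 \<Longrightarrow> \<exists>a b c d. isP4 W R' a b c d"
    and cl: "cls V R" and tf: "twinfree V R"
  shows "conn V R"
proof -
  have sym: "\<forall>x\<in>V. \<forall>y\<in>V. R x y \<longleftrightarrow> R y x" and irr: "\<forall>x\<in>V. \<not> R x x" and fin: "finite V"
    using cl unfolding cls_def simple_graph_def by auto
  have iso: "\<forall>t\<in>V. \<not> R x t" if xy: "x \<in> V" "y \<in> V" "\<not> reach V R x y" for x y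
  proof (rule ccontr)
    assume "\<not> (\<forall>t\<in>V. \<not> R x t)"
    then obtain t where t: "t \<in> V" "R x t" by blast
    define C where "C = {s \<in> V. reach V R x s}"
    have CV: "C \<subseteq> V" unfolding C_def by auto
    have xC: "x \<in> C" "t \<in> C" "y \<notin> C" unfolding C_def using xy t reach_refl[of V R x] reach_edge[of x V t R] by auto
    have "x \<noteq> t" using irr t xy by auto
    have finC: "finite C" using fin CV finite_subset by blast
    have "card {x,t} \<le> card C" using xC finC by (intro card_mono) auto
    then have c2: "card C \<ge> 2" using \<open>x \<noteq> t\<close> by auto
    have "C \<subset> V" using CV xC xy by blast
    then have c1: "card C < card V" using psubset_card_mono[OF fin] by blast
    have clC: "cls C R" using cls_mono[OF CV cl] .
    have out: "\<not> R u s" if "u \<in> C" "s \<in> V" "s \<notin> C" for u s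
    proof
      assume "R u s"
      moreover have "u \<in> V" "reach V R x u" using that CV unfolding C_def by auto
      ultimately have "reach V R x s" using that reach_edge[of u V s R] reach_trans by metis
      then show False using that unfolding C_def by auto
    qed
    have tfC: "twinfree C R"
      unfolding twinfree_def
    proof (intro allI notI)
      fix u w assume tw: "twins C R u w"
      have "twins V R u w" unfolding twins_def
      proof (intro conjI ballI)
        show "u \<in> V" "w \<in> V" "u \<noteq> w" using tw CV unfolding twins_def by auto
        fix s assume sV: "s \<in> V - {u, w}"
        show "R u s \<longleftrightarrow> R w s"
        proof (cases "s \<in> C")
          case True then show ?thesis using tw sV unfolding twins_def by auto
        next
          case False
          have "u \<in> C" "w \<in> C" using tw unfolding twins_def by auto
          then show ?thesis using out[of u s] out[of w s] False sV by auto
        qed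
      qed
      then show False using tf unfolding twinfree_def by blast
    qed
    obtain q1 q2 q3 q4 where q: "isP4 C R q1 q2 q3 q4" using IH[OF c1 clC tfC c2] by blast
    then have qC: "q1 \<in> C" "q2 \<in> C" "q3 \<in> C" "q4 \<in> C" unfolding isP4_def by auto
    have "\<not> R q1 y" "\<not> R q2 y" "\<not> R q3 y" "\<not> R q4 y" using out qC xC xy by auto
    moreover have "y \<noteq> q1" "y \<noteq> q2" "y \<noteq> q3" "y \<noteq> q4" using qC xC by auto
    moreover have "R q2 q1" "R q4 q3" "\<not> R q4 q1" "q1 \<in> V" "q2 \<in> V" "q3 \<in> V" "q4 \<in> V"
      using q qC CV sym unfolding isP4_def by blast+
    ultimately show False
      using no_cogem[OF cl, of q2 q4 q1 q3 y] q xy unfolding isP4_def by auto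
  qed
  show ?thesis unfolding conn_def
  proof (intro ballI, rule ccontr)
    fix x y assume xy: "x \<in> V" "y \<in> V" "\<not> reach V R x y"
    have yx: "\<not> reach V R y x" using xy reach_sym[OF sym] by blast
    have "x \<noteq> y" using xy reach_refl[of V R x] by auto
    then have "twins V R x y" using iso[OF xy] iso[OF xy(2,1) yx] xy unfolding twins_def by auto
    then show False using tf unfolding twinfree_def by blast
  qed
qed

lemma mod_small:
  fixes V :: "'a set" and R
  assumes IH: "\<And>(W::'a set) R'. card W < card V \<Longrightarrow> cls W R' \<Longrightarrow> twinfree W R' \<Longrightarrow> card W \<ge> 2 \<Longrightarrow> \<exists>a b c d. isP4 W R' a b c d"
    and cl: "cls V R" and tf: "twinfree V R" and MV: "M \<subseteq> V" and q: "q \<in> V" "q \<notin> M"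
    and nq: "\<forall>u\<in>M. \<not> R u q"
    and md: "\<forall>u\<in>M. \<forall>w\<in>M. \<forall>t\<in>V - M. R u t = R w t"
  shows "card M \<le> 1"
proof (rule ccontr)
  assume "\<not> card M \<le> 1"
  then have c2: "card M \<ge> 2" by auto
  have sym: "\<forall>x\<in>V. \<forall>y\<in>V. R x y \<longleftrightarrow> R y x" and fin: "finite V"
    using cl unfolding cls_def simple_graph_def by auto
  have "M \<subset> V" using MV q by blast
  then have c1: "card M < card V" using psubset_card_mono[OF fin] by blast
  have clM: "cls M R" using cls_mono[OF MV cl] .
  have tfM: "twinfree M R"
    unfolding twinfree_def
  proof (intro allI notI)
    fix u w assume tw: "twins M R u w"
    have "twins V R u w" unfolding twins_def
    proof (intro conjI ballI)
      show "u \<in> V" "w \<in> V" "u \<noteq> w" using tw MV unfolding twins_def by auto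
      fix s assume sV: "s \<in> V - {u, w}"
      show "R u s \<longleftrightarrow> R w s"
      proof (cases "s \<in> M")
        case True then show ?thesis using tw sV unfolding twins_def by auto
      next
        case False
        have "u \<in> M" "w \<in> M" using tw unfolding twins_def by auto
        moreover have "s \<in> V - M" using False sV by auto
        ultimately show ?thesis using md by blast
      qed
    qed
    then show False using tf unfolding twinfree_def by blast
  qed
  obtain q1 q2 q3 q4 where qq: "isP4 M R q1 q2 q3 q4" using IH[OF c1 clM tfM c2] by blast
  then have qM: "q1 \<in> M" "q2 \<in> M" "q3 \<in> M" "q4 \<in> M" unfolding isP4_def by auto
  have "\<not> R q1 q" "\<not> R q2 q" "\<not> R q3 q" "\<not> R q4 q" using nq qM by auto
  moreover have "q \<noteq> q1" "q \<noteq> q2" "q \<noteq> q3" "q \<noteq> q4" using qM q by auto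
  moreover have "R q2 q1" "R q4 q3" "\<not> R q4 q1" "q1 \<in> V" "q2 \<in> V" "q3 \<in> V" "q4 \<in> V"
    using qq qM MV sym unfolding isP4_def by blast+
  ultimately show False
    using no_cogem[OF cl, of q2 q4 q1 q3 q] qq q unfolding isP4_def by auto
qed

definition MLc :: "'a set \<Rightarrow> ('a \<Rightarrow> 'a \<Rightarrow> bool) \<Rightarrow> bool" where
  "MLc V R \<longleftrightarrow> (\<exists>a b c d. isP4 V R a b c d \<and> (V = {a,b,c,d} \<or>
      (\<exists>z. z \<notin> {a,b,c,d} \<and> R b z \<and> R c z \<and> \<not> R a z \<and> \<not> R d z \<and> V = {a,b,c,d,z})))"

lemma card1_eq: "finite M \<Longrightarrow> card M \<le> 1 \<Longrightarrow> x \<in> M \<Longrightarrow> y \<in> M \<Longrightarrow> x = y"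
  using card_le_Suc0_iff_eq by (metis One_nat_def)

lemma mainlem:
  "cls V R \<Longrightarrow> twinfree V R \<Longrightarrow> card V \<ge> 2 \<Longrightarrow> MLc V R"
proof (induction "card V" arbitrary: V R rule: less_induct)
  case less
  note cl = less(2) and tf = less(3)
  have IH: "\<exists>a b c d. isP4 W R' a b c d"
    if "card W < card V" "cls W R'" "twinfree W R'" "card W \<ge> 2" for W :: "'a set" and R'
    using less(1)[OF that] unfolding MLc_def by blast
  have sym: "\<forall>x\<in>V. \<forall>y\<in>V. R x y \<longleftrightarrow> R y x" and fin: "finite V" and sg: "simple_graph V R"
    using cl unfolding cls_def simple_graph_def by auto
  have cn: "conn V R" using comp_arg[OF IH cl tf] by blast
  have cn2: "conn V (complement_graph R)"
    using comp_arg[OF IH cls_co[OF cl]] tf twinfree_co by blast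
  obtain a b c d where p: "isP4 V R a b c d" using seinsche[OF fin less(4) sg cn cn2] by blast
  then have mem: "a\<in>V" "b\<in>V" "c\<in>V" "d\<in>V" and dist: "distinct [a,b,c,d]"
    and p4: "R a b" "R b c" "R c d" "\<not>R a c" "\<not>R a d" "\<not>R b d" unfolding isP4_def by auto
  have s: "\<And>x y. x\<in>V \<Longrightarrow> y\<in>V \<Longrightarrow> R x y = R y x" using sym by blast
  define MA where "MA = {x\<in>V. x \<notin> {b,c,d} \<and> TA R a b c d x}"
  define MB where "MB = {x\<in>V. x \<notin> {a,c,d} \<and> TB R a b c d x}"
  define MC where "MC = {x\<in>V. x \<notin> {a,b,d} \<and> TC R a b c d x}"
  define MD where "MD = {x\<in>V. x \<notin> {a,b,c} \<and> TD R a b c d x}"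
  define MZ where "MZ = {x\<in>V. x \<notin> {a,b,c,d} \<and> TZ R a b c d x}"
  have sy: "R b a = R a b" "R c a = R a c" "R d a = R a d" "R c b = R b c" "R d b = R b d" "R d c = R c d"
    using s mem by blast+
  have inM: "a \<in> MA" "b \<in> MB" "c \<in> MC" "d \<in> MD"
    unfolding MA_def MB_def MC_def MD_def T_defs using mem dist p4 by (auto simp add: sy)
  have cA: "card MA \<le> 1"
  proof (rule mod_small[OF IH cl tf _ mem(4)])
    show "MA \<subseteq> V" unfolding MA_def by auto
    show "d \<notin> MA" unfolding MA_def by auto
    show "\<forall>u\<in>MA. \<not> R u d" unfolding MA_def TA_def by (auto simp: s[of _ d, OF _ mem(4)])
    show "\<forall>u\<in>MA. \<forall>w\<in>MA. \<forall>t\<in>V - MA. R u t = R w t"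
    proof (intro ballI)
      fix u w t assume "u \<in> MA" "w \<in> MA" "t \<in> V - MA"
      then show "R u t = R w t" using modA[OF cl mem dist p4, of u t] modA[OF cl mem dist p4, of w t]
        unfolding MA_def by auto
    qed
  qed
  have cB: "card MB \<le> 1"
  proof (rule mod_small[OF IH cl tf _ mem(4)])
    show "MB \<subseteq> V" unfolding MB_def by auto
    show "d \<notin> MB" unfolding MB_def by auto
    show "\<forall>u\<in>MB. \<not> R u d" unfolding MB_def TB_def by (auto simp: s[of _ d, OF _ mem(4)])
    show "\<forall>u\<in>MB. \<forall>w\<in>MB. \<forall>t\<in>V - MB. R u t = R w t"
    proof (intro ballI)
      fix u w t assume "u \<in> MB" "w \<in> MB" "t \<in> V - MB"
      then show "R u t = R w t" using modB[OF cl mem dist p4, of u t] modB[OF cl mem dist p4, of w t]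
        unfolding MB_def by auto
    qed
  qed
  have cC: "card MC \<le> 1"
  proof (rule mod_small[OF IH cl tf _ mem(1)])
    show "MC \<subseteq> V" unfolding MC_def by auto
    show "a \<notin> MC" unfolding MC_def by auto
    show "\<forall>u\<in>MC. \<not> R u a" unfolding MC_def TC_def by (auto simp: s[of _ a, OF _ mem(1)])
    show "\<forall>u\<in>MC. \<forall>w\<in>MC. \<forall>t\<in>V - MC. R u t = R w t"
    proof (intro ballI)
      fix u w t assume "u \<in> MC" "w \<in> MC" "t \<in> V - MC"
      then show "R u t = R w t" using modC[OF cl mem dist p4, of u t] modC[OF cl mem dist p4, of w t]
        unfolding MC_def by auto
    qed
  qed
  have cD: "card MD \<le> 1"
  proof (rule mod_small[OF IH cl tf _ mem(1)])
    show "MD \<subseteq> V" unfolding MD_def by auto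
    show "a \<notin> MD" unfolding MD_def by auto
    show "\<forall>u\<in>MD. \<not> R u a" unfolding MD_def TD_def by (auto simp: s[of _ a, OF _ mem(1)])
    show "\<forall>u\<in>MD. \<forall>w\<in>MD. \<forall>t\<in>V - MD. R u t = R w t"
    proof (intro ballI)
      fix u w t assume "u \<in> MD" "w \<in> MD" "t \<in> V - MD"
      then show "R u t = R w t" using modD[OF cl mem dist p4, of u t] modD[OF cl mem dist p4, of w t]
        unfolding MD_def by auto
    qed
  qed
  have cZ: "card MZ \<le> 1"
  proof (rule mod_small[OF IH cl tf _ mem(1)])
    show "MZ \<subseteq> V" unfolding MZ_def by auto
    show "a \<notin> MZ" unfolding MZ_def by auto
    show "\<forall>u\<in>MZ. \<not> R u a" unfolding MZ_def TZ_def by (auto simp: s[of _ a, OF _ mem(1)])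
    show "\<forall>u\<in>MZ. \<forall>w\<in>MZ. \<forall>t\<in>V - MZ. R u t = R w t"
    proof (intro ballI)
      fix u w t assume "u \<in> MZ" "w \<in> MZ" "t \<in> V - MZ"
      then show "R u t = R w t" using modZ[OF cl mem dist p4, of u t] modZ[OF cl mem dist p4, of w t]
        unfolding MZ_def by auto
    qed
  qed
  have finM: "finite MA" "finite MB" "finite MC" "finite MD" "finite MZ"
    unfolding MA_def MB_def MC_def MD_def MZ_def using fin by auto
  have cover: "x \<in> MZ" if x: "x \<in> V" "x \<notin> {a,b,c,d}" for x
  proof -
    have d5: "distinct [a,b,c,d,x]" using dist x by auto
    have "x \<notin> MA" using card1_eq[OF finM(1) cA inM(1)] x by auto
    moreover have "x \<notin> MB" using card1_eq[OF finM(2) cB inM(2)] x by auto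
    moreover have "x \<notin> MC" using card1_eq[OF finM(3) cC inM(3)] x by auto
    moreover have "x \<notin> MD" using card1_eq[OF finM(4) cD inM(4)] x by auto
    ultimately show ?thesis using five[OF cl mem x(1) d5 p4] x
      unfolding MA_def MB_def MC_def MD_def MZ_def by auto
  qed
  show ?case
  proof (cases "MZ = {}")
    case True
    then have "V = {a,b,c,d}" using cover mem by blast
    then show ?thesis unfolding MLc_def using p by blast
  next
    case False
    then obtain z where z: "z \<in> MZ" by blast
    have "V = {a,b,c,d,z}"
    proof
      show "V \<subseteq> {a,b,c,d,z}" using cover card1_eq[OF finM(5) cZ z] by blast
      show "{a,b,c,d,z} \<subseteq> V" using mem z unfolding MZ_def by auto
    qed
    moreover have "z \<notin> {a,b,c,d}" "R b z" "R c z" "\<not> R a z" "\<not> R d z"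
      using z unfolding MZ_def TZ_def by auto
    ultimately show ?thesis unfolding MLc_def using p by blast
  qed
qed

definition tfree :: "nat set \<Rightarrow> (nat \<Rightarrow> nat \<Rightarrow> bool) \<Rightarrow> bool" where
  "tfree H F \<longleftrightarrow> (\<forall>i\<in>H. \<forall>j\<in>H. i \<noteq> j \<longrightarrow> (\<exists>w\<in>H. w \<noteq> i \<and> w \<noteq> j \<and> F i w \<noteq> F j w))"

lemma swap_iso:
  assumes tw: "twins V R u v" and sym: "\<forall>x\<in>V. \<forall>y\<in>V. R x y \<longleftrightarrow> R y x"
    and irr: "\<forall>x\<in>V. \<not> R x x" and S: "S \<subseteq> V" "v \<in> S" "u \<notin> S"
  shows "graph_iso (insert u (S - {v})) R S R"
proof -
  let ?g = "\<lambda>x. if x = u then v else x"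
  have uv: "u \<in> V" "v \<in> V" "u \<noteq> v" and nb: "\<forall>w\<in>V - {u, v}. R u w \<longleftrightarrow> R v w"
    using tw unfolding twins_def by auto
  have "inj_on ?g (insert u (S - {v}))" unfolding inj_on_def using S by auto
  moreover have "?g ` (insert u (S - {v})) = S" using S uv by auto
  ultimately have b: "bij_betw ?g (insert u (S - {v})) S" unfolding bij_betw_def by blast
  have "\<forall>x\<in>insert u (S - {v}). \<forall>y\<in>insert u (S - {v}). R x y \<longleftrightarrow> R (?g x) (?g y)"
  proof (intro ballI)
    fix x y assume x: "x \<in> insert u (S - {v})" and y: "y \<in> insert u (S - {v})"
    show "R x y \<longleftrightarrow> R (?g x) (?g y)"
    proof (cases "x = u")
      case True
      show ?thesis
      proof (cases "y = u")
        case True then show ?thesis using \<open>x = u\<close> irr uv by auto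
      next
        case False
        then have "y \<in> V - {u, v}" using y S by auto
        then show ?thesis using \<open>x = u\<close> False nb by auto
      qed
    next
      case xu: False
      show ?thesis
      proof (cases "y = u")
        case True
        have xV: "x \<in> V - {u, v}" using x xu S by auto
        then have "R u x \<longleftrightarrow> R v x" using nb by auto
        moreover have "R x u = R u x" "R x v = R v x" using sym xV uv by auto
        ultimately show ?thesis using True xu by auto
      next
        case False then show ?thesis using xu by auto
      qed
    qed
  qed
  then show ?thesis using b unfolding graph_iso_def by blast
qed

lemma elim_ind:
  assumes tw: "twins V R u v" and sym: "\<forall>x\<in>V. \<forall>y\<in>V. R x y \<longleftrightarrow> R y x"
    and irr: "\<forall>x\<in>V. \<not> R x x" and tf: "tfree H F" and hi: "has_induced V R H F"
  shows "has_induced (V - {v}) R H F"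
proof -
  obtain S where S: "S \<subseteq> V" "graph_iso S R H F" using hi unfolding has_induced_def by blast
  obtain f where f: "bij_betw f S H" "\<forall>x\<in>S. \<forall>y\<in>S. R x y \<longleftrightarrow> F (f x) (f y)"
    using S(2) unfolding graph_iso_def by blast
  have uv: "u \<in> V" "v \<in> V" "u \<noteq> v" and nb: "\<forall>w\<in>V - {u, v}. R u w \<longleftrightarrow> R v w"
    using tw unfolding twins_def by auto
  show ?thesis
  proof (cases "v \<in> S")
    case False then show ?thesis using S unfolding has_induced_def by blast
  next
    case vS: True
    show ?thesis
    proof (cases "u \<in> S")
      case uS: True
      have fu: "f u \<in> H" "f v \<in> H" "f u \<noteq> f v"
        using f(1) uS vS uv unfolding bij_betw_def inj_on_def by auto
      then obtain w where w: "w \<in> H" "w \<noteq> f u" "w \<noteq> f v" "F (f u) w \<noteq> F (f v) w"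
        using tf unfolding tfree_def by blast
      define t where "t = inv_into S f w"
      have t: "t \<in> S" "f t = w" unfolding t_def
        using w(1) f(1) bij_betw_inv_into bij_betwE bij_betw_inv_into_right by metis+
      have "t \<noteq> u" "t \<noteq> v" using t w by auto
      then have "t \<in> V - {u, v}" using t S by auto
      then have "R u t \<longleftrightarrow> R v t" using nb by auto
      then show ?thesis using f(2) uS vS t w by auto
    next
      case uS: False
      have "graph_iso (insert u (S - {v})) R S R" using swap_iso[OF tw sym irr S(1) vS uS] .
      then have "graph_iso (insert u (S - {v})) R H F" using S(2) iso_trans by blast
      moreover have "insert u (S - {v}) \<subseteq> V - {v}" using S uv by auto
      ultimately show ?thesis unfolding has_induced_def by blast
    qed
  qed
qed

lemma ex5: "(\<exists>i<(5::nat). P i) \<longleftrightarrow> P 0 \<or> P 1 \<or> P 2 \<or> P 3 \<or> P 4"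
proof -
  have "(5::nat) = Suc (Suc (Suc (Suc (Suc 0))))" by simp
  then show ?thesis by (simp only: Ex_less_Suc) (auto simp: numeral_eq_Suc)
qed
lemma all6: "(\<forall>i<(6::nat). P i) \<longleftrightarrow> P 0 \<and> P 1 \<and> P 2 \<and> P 3 \<and> P 4 \<and> P 5"
proof -
  have "(6::nat) = Suc 5" by simp
  then show ?thesis by (simp only: All_less_Suc all5) auto
qed
lemma ex6: "(\<exists>i<(6::nat). P i) \<longleftrightarrow> P 0 \<or> P 1 \<or> P 2 \<or> P 3 \<or> P 4 \<or> P 5"
proof -
  have "(6::nat) = Suc 5" by simp
  then show ?thesis by (simp only: Ex_less_Suc ex5) auto
qed

lemma tfree5: "tfree {0..<5} F \<longleftrightarrow> (\<forall>i<5. \<forall>j<5. i \<noteq> j \<longrightarrow> (\<exists>w<5. w \<noteq> i \<and> w \<noteq> j \<and> F i w \<noteq> F j w))"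
  unfolding tfree_def Ball_def Bex_def atLeastLessThan_iff by simp
lemma tfree6: "tfree {0..<6} F \<longleftrightarrow> (\<forall>i<6. \<forall>j<6. i \<noteq> j \<longrightarrow> (\<exists>w<6. w \<noteq> i \<and> w \<noteq> j \<and> F i w \<noteq> F j w))"
  unfolding tfree_def Ball_def Bex_def atLeastLessThan_iff by simp

lemma tf_house: "tfree {0..<5} house_adj"
  unfolding tfree5 all5 ex5 by (simp add: house_adj_def cycle_adj_def doubleton_eq_iff)
lemma tf_gem: "tfree {0..<5} gem_adj"
  unfolding tfree5 all5 ex5 by (simp add: gem_adj_def doubleton_eq_iff)
lemma tf_domino: "tfree {0..<6} domino_adj"
  unfolding tfree6 all6 ex6 by (simp add: domino_adj_def cycle_adj_def doubleton_eq_iff)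

lemma suc_mod: "m < k \<Longrightarrow> Suc m mod k = (if Suc m = k then 0 else Suc m)"
  by (cases "Suc m = k") (auto simp: mod_less)

lemma tf_cycle:
  assumes k: "k \<ge> 5" shows "tfree {0..<k} (cycle_adj k)"
  unfolding tfree_def
proof (intro ballI impI)
  fix i j assume i: "i \<in> {0..<k}" and j: "j \<in> {0..<k}" and ij: "i \<noteq> j"
  have ik: "i < k" and jk: "j < k" using i j by auto
  show "\<exists>w\<in>{0..<k}. w \<noteq> i \<and> w \<noteq> j \<and> cycle_adj k i w \<noteq> cycle_adj k j w"
  proof (cases "j = (i + 1) mod k \<or> j = ((i + 1) mod k + 1) mod k")
    case False
    define w where "w = (i + 1) mod k"
    have wk: "w < k" unfolding w_def using k by auto
    have "w \<noteq> i" "w \<noteq> j" "cycle_adj k i w" "\<not> cycle_adj k j w"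
      unfolding w_def cycle_adj_def using False ik jk k ij
      by (auto simp: suc_mod split: if_splits)
    then show ?thesis using wk by auto
  next
    case True
    define w where "w = (if i = 0 then k - 1 else i - 1)"
    have wk: "w < k" unfolding w_def using k ik by auto
    have "w \<noteq> i" "w \<noteq> j" "cycle_adj k i w" "\<not> cycle_adj k j w"
      unfolding w_def cycle_adj_def using True ik jk k ij wk
      by (auto simp: suc_mod split: if_splits)
    then show ?thesis using wk by auto
  qed
qed

lemma DH_twin:
  assumes tw: "twins V R u v" and sym: "\<forall>x\<in>V. \<forall>y\<in>V. R x y \<longleftrightarrow> R y x"
    and irr: "\<forall>x\<in>V. \<not> R x x" and dh: "distance_hereditary (V - {v}) R"
  shows "distance_hereditary V R"
  using dh elim_ind[OF tw sym irr tf_cycle] elim_ind[OF tw sym irr tf_house]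
    elim_ind[OF tw sym irr tf_domino] elim_ind[OF tw sym irr tf_gem]
  unfolding distance_hereditary_def by blast

lemma DHco_twin:
  assumes sg: "simple_graph V R" and tw: "twins V R u v" and dh: "DH_coDH (V - {v}) R"
  shows "DH_coDH V R"
proof -
  have sym: "\<forall>x\<in>V. \<forall>y\<in>V. R x y \<longleftrightarrow> R y x" and irr: "\<forall>x\<in>V. \<not> R x x"
    using sg unfolding simple_graph_def by auto
  have sym2: "\<forall>x\<in>V. \<forall>y\<in>V. complement_graph R x y \<longleftrightarrow> complement_graph R y x"
    and irr2: "\<forall>x\<in>V. \<not> complement_graph R x x"
    using simple_co[OF sg] unfolding simple_graph_def by auto
  have tw2: "twins V (complement_graph R) u v" using tw twins_co by metis
  show ?thesis using dh DH_twin[OF tw sym irr] DH_twin[OF tw2 sym2 irr2]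
    unfolding DH_coDH_def by blast
qed

lemma deg_contra:
  assumes iso: "graph_iso {0..<5::nat} B {0..<5::nat} F" and t: "t < 5"
    and bt: "\<forall>j<5. B t j \<longrightarrow> j = t0"
    and md: "\<forall>i<5. \<exists>w1<5. \<exists>w2<5. w1 \<noteq> w2 \<and> F i w1 \<and> F i w2"
  shows False
proof -
  obtain f where f: "bij_betw f {0..<5} {0..<5}" "\<forall>x\<in>{0..<5}. \<forall>y\<in>{0..<5}. B x y \<longleftrightarrow> F (f x) (f y)"
    using iso unfolding graph_iso_def by blast
  have ft: "f t < 5" using f(1) t bij_betwE by fastforce
  obtain w1 w2 where w: "w1 < 5" "w2 < 5" "w1 \<noteq> w2" "F (f t) w1" "F (f t) w2" using md ft by blast
  let ?g = "inv_into {0..<5} f"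
  have g1: "?g w1 < 5" "f (?g w1) = w1"
    using w(1) f(1) bij_betw_inv_into bij_betwE bij_betw_inv_into_right atLeastLessThan_iff
    by (metis zero_le)+
  have g2: "?g w2 < 5" "f (?g w2) = w2"
    using w(2) f(1) bij_betw_inv_into bij_betwE bij_betw_inv_into_right atLeastLessThan_iff
    by (metis zero_le)+
  have "B t (?g w1)" "B t (?g w2)" using f(2) t g1 g2 w by auto
  then have "?g w1 = t0" "?g w2 = t0" using bt g1 g2 by auto
  then show False using g1 g2 w by metis
qed

lemma md_C5: "\<forall>i<5. \<exists>w1<5. \<exists>w2<5. w1 \<noteq> w2 \<and> cycle_adj 5 i w1 \<and> cycle_adj 5 i w2"
  unfolding all5 ex5 by (simp add: cycle_adj_def)
lemma md_house: "\<forall>i<5. \<exists>w1<5. \<exists>w2<5. w1 \<noteq> w2 \<and> house_adj i w1 \<and> house_adj i w2"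
  unfolding all5 ex5 by (simp add: house_adj_def cycle_adj_def doubleton_eq_iff)
lemma md_gem: "\<forall>i<5. \<exists>w1<5. \<exists>w2<5. w1 \<noteq> w2 \<and> gem_adj i w1 \<and> gem_adj i w2"
  unfolding all5 ex5 by (simp add: gem_adj_def doubleton_eq_iff)

lemma small_ind:
  assumes iso: "graph_iso W R S B" and S: "S \<subseteq> {0..<5::nat}" and hi: "has_induced W R {0..<k::nat} F"
  shows "k \<le> 5 \<and> (k = 5 \<longrightarrow> graph_iso {0..<5} B {0..<5} F)"
proof -
  obtain S' where S': "S' \<subseteq> W" "graph_iso S' R {0..<k} F" using hi unfolding has_induced_def by blast
  have finS: "finite S" using S finite_subset by blast
  have finW: "finite W" using iso_finite[OF iso] finS by blast
  have cS: "card S \<le> 5" using card_mono[OF _ S] by simp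
  have cW: "card W = card S" using iso_card[OF iso] .
  have cS': "card S' = k" using iso_card[OF S'(2)] by simp
  have "card S' \<le> card W" using card_mono[OF finW S'(1)] .
  then have k5: "k \<le> 5" using cS cW cS' by linarith
  moreover have "k = 5 \<longrightarrow> graph_iso {0..<5} B {0..<5} F"
  proof
    assume k: "k = 5"
    have "S' = W" using card_subset_eq[OF finW S'(1)] cS' cW cS k \<open>card S' \<le> card W\<close> by linarith
    moreover have "S = {0..<5}" using card_subset_eq[OF _ S] cS' cW cS k \<open>card S' \<le> card W\<close> by simp
    ultimately show "graph_iso {0..<5} B {0..<5} F" using iso S'(2) k iso_sym iso_trans by metis
  qed
  ultimately show ?thesis by blast
qed

lemma DH_small:
  assumes iso: "graph_iso W R S B" and S: "S \<subseteq> {0..<5::nat}" and t: "t < 5"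
    and bt: "\<forall>j<5. B t j \<longrightarrow> j = t0"
  shows "distance_hereditary W R"
  unfolding distance_hereditary_def
proof (intro conjI allI impI notI)
  fix k :: nat assume k: "5 \<le> k" and h: "has_induced W R {0..<k} (cycle_adj k)"
  then have "k = 5" "graph_iso {0..<5} B {0..<5} (cycle_adj 5)" using small_ind[OF iso S h] by auto
  then show False using deg_contra[of B "cycle_adj 5" t t0] t bt md_C5 by blast
next
  assume h: "has_induced W R {0..<5} house_adj"
  show False using small_ind[OF iso S h] deg_contra[of B house_adj t t0] t bt md_house by blast
next
  assume h: "has_induced W R {0..<6} domino_adj"
  show False using small_ind[OF iso S h] by simp
next
  assume h: "has_induced W R {0..<5} gem_adj"
  show False using small_ind[OF iso S h] deg_contra[of B gem_adj t t0] t bt md_gem by blast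
qed

lemma base_DH:
  assumes sg: "simple_graph W E" and iso: "graph_iso W E S bull_adj" and S: "S \<subseteq> {0..<5::nat}"
  shows "DH_coDH W E"
proof -
  have b3: "\<forall>j<5. bull_adj 3 j \<longrightarrow> j = 0" unfolding all5 by (simp add: bull_adj_def doubleton_eq_iff)
  have b0: "\<forall>j<5. (\<lambda>i j. i \<noteq> j \<and> \<not> bull_adj i j) 0 j \<longrightarrow> j = 4"
    unfolding all5 by (simp add: bull_adj_def doubleton_eq_iff)
  obtain f where f: "bij_betw f W S" "\<forall>x\<in>W. \<forall>y\<in>W. E x y \<longleftrightarrow> bull_adj (f x) (f y)"
    using iso unfolding graph_iso_def by blast
  have "\<forall>x\<in>W. \<forall>y\<in>W. complement_graph E x y \<longleftrightarrow> (\<lambda>i j. i \<noteq> j \<and> \<not> bull_adj i j) (f x) (f y)"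
    using f unfolding complement_graph_def bij_betw_def inj_on_def by auto
  then have iso2: "graph_iso W (complement_graph E) S (\<lambda>i j. i \<noteq> j \<and> \<not> bull_adj i j)"
    using f(1) unfolding graph_iso_def by blast
  show ?thesis unfolding DH_coDH_def
    using DH_small[OF iso S _ b3] DH_small[OF iso2 S _ b0] by simp
qed

lemma bw:
  assumes "twin_elim E V W" "simple_graph V E" "\<exists>S\<subseteq>{0..<5::nat}. graph_iso W E S bull_adj"
  shows "DH_coDH V E"
  using assms
proof (induction rule: twin_elim.induct)
  case (refl V) then show ?case using base_DH by blast
next
  case (step V u v W)
  have "simple_graph (V - {v}) E" using step(4) unfolding simple_graph_def by auto
  then have "DH_coDH (V - {v}) E" using step by blast
  then show ?case using DHco_twin[OF step(4) step(1)] by blast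
qed

lemma nth_iso: "distinct vs \<Longrightarrow> graph_iso {0..<length vs} (\<lambda>i j. R (vs!i) (vs!j)) (set vs) R"
  unfolding graph_iso_def bij_betw_def
  by (rule exI[of _ "nth vs"]) (auto simp: inj_on_def nth_eq_iff_index_eq set_conv_nth)

lemma iso_list:
  assumes "distinct vs" "distinct is" "length vs = n" "length is = n"
    "\<forall>i<n. \<forall>j<n. E (vs!i) (vs!j) \<longleftrightarrow> F (is!i) (is!j)"
  shows "graph_iso (set vs) E (set is) F"
proof -
  have a: "graph_iso (set vs) E {0..<length vs} (\<lambda>i j. E (vs!i) (vs!j))"
    using iso_sym[OF nth_iso[OF assms(1)]] .
  have "graph_iso {0..<length vs} (\<lambda>i j. E (vs!i) (vs!j)) (set is) F
        = graph_iso {0..<length vs} (\<lambda>i j. F (is!i) (is!j)) (set is) F"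
    by (rule graph_iso_cong) (use assms(3,5) in auto)
  moreover have "graph_iso {0..<length vs} (\<lambda>i j. F (is!i) (is!j)) (set is) F"
    using nth_iso[OF assms(2)] assms(3,4) by simp
  ultimately show ?thesis using a iso_trans by blast
qed

lemma all4: "(\<forall>i<(4::nat). P i) \<longleftrightarrow> P 0 \<and> P 1 \<and> P 2 \<and> P 3"
  by (auto simp: less_Suc_eq numeral_eq_Suc)

lemma fw:
  "cls V E \<Longrightarrow> \<exists>W. twin_elim E V W \<and> (\<exists>S\<subseteq>{0..<5::nat}. graph_iso W E S bull_adj)"
proof (induction "card V" arbitrary: V rule: less_induct)
  case less
  have fin: "finite V" and sg: "simple_graph V E" using less(2) unfolding cls_def simple_graph_def by auto
  have s: "\<And>x y. x\<in>V \<Longrightarrow> y\<in>V \<Longrightarrow> E x y = E y x" and irr: "\<And>x. x\<in>V \<Longrightarrow> \<not> E x x"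
    using sg unfolding simple_graph_def by auto
  show ?case
  proof (cases "\<exists>u v. twins V E u v")
    case True
    then obtain u v where tw: "twins V E u v" by blast
    then have "v \<in> V" unfolding twins_def by auto
    then have "card (V - {v}) < card V" using fin by (meson card_Diff1_less)
    moreover have "cls (V - {v}) E" using cls_mono[OF _ less(2)] by blast
    ultimately obtain W where "twin_elim E (V - {v}) W" "\<exists>S\<subseteq>{0..<5::nat}. graph_iso W E S bull_adj"
      using less(1) by blast
    then show ?thesis using twin_elim.step[OF tw] by blast
  next
    case False
    then have tf: "twinfree V E" unfolding twinfree_def by blast
    show ?thesis
    proof (cases "card V \<ge> 2")
      case True
      then have "MLc V E" using mainlem[OF less(2) tf] by blast
      then obtain a b c d where p: "isP4 V E a b c d" and
        cs: "V = {a,b,c,d} \<or> (\<exists>z. z \<notin> {a,b,c,d} \<and> E b z \<and> E c z \<and> \<not> E a z \<and> \<not> E d z \<and> V = {a,b,c,d,z})"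
        unfolding MLc_def by blast
      have mem: "a\<in>V" "b\<in>V" "c\<in>V" "d\<in>V" and dist: "distinct [a,b,c,d]"
        and p4: "E a b" "E b c" "E c d" "\<not>E a c" "\<not>E a d" "\<not>E b d" using p unfolding isP4_def by auto
      have sy: "E b a = E a b" "E c a = E a c" "E d a = E a d" "E c b = E b c" "E d b = E b d" "E d c = E c d"
        using s mem by blast+
      have ir: "\<not> E a a" "\<not> E b b" "\<not> E c c" "\<not> E d d" using irr mem by auto
      show ?thesis
      proof (cases "V = {a,b,c,d}")
        case True
        have h: "\<forall>i<4. \<forall>j<4. E ([a,b,c,d]!i) ([a,b,c,d]!j) \<longleftrightarrow> bull_adj ([3,0,1,4::nat]!i) ([3,0,1,4::nat]!j)"
          unfolding all4 by (simp add: bull_adj_def doubleton_eq_iff sy ir p4)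
        have "graph_iso (set [a,b,c,d]) E (set [3,0,1,4::nat]) bull_adj"
          by (rule iso_list[OF _ _ _ _ h]) (use dist in simp_all)
        then have "graph_iso V E {3,0,1,4} bull_adj" using True by simp
        moreover have "{3,0,1,4::nat} \<subseteq> {0..<5}" by auto
        ultimately show ?thesis using twin_elim.refl by blast
      next
        case False
        then obtain z where z: "z \<notin> {a,b,c,d}" "E b z" "E c z" "\<not> E a z" "\<not> E d z" "V = {a,b,c,d,z}"
          using cs by blast
        have zV: "z \<in> V" using z by auto
        have zn: "a \<noteq> z" "b \<noteq> z" "c \<noteq> z" "d \<noteq> z" using z(1) by blast+
        have sz: "E z a = E a z" "E z b = E b z" "E z c = E c z" "E z d = E d z" "\<not> E z z"
          using s[OF zV] irr[OF zV] mem by auto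
        have h: "\<forall>i<5. \<forall>j<5. E ([a,b,c,d,z]!i) ([a,b,c,d,z]!j) \<longleftrightarrow> bull_adj ([3,0,1,4,2::nat]!i) ([3,0,1,4,2::nat]!j)"
          unfolding all5 by (simp add: bull_adj_def doubleton_eq_iff sy ir p4 sz z(2-5))
        have "graph_iso (set [a,b,c,d,z]) E (set [3,0,1,4,2::nat]) bull_adj"
          by (rule iso_list[OF _ _ _ _ h]) (use dist zn in simp_all)
        then have "graph_iso V E {3,0,1,4,2} bull_adj" using z(6) by simp
        moreover have "{3,0,1,4,2::nat} \<subseteq> {0..<5}" by auto
        ultimately show ?thesis using twin_elim.refl by blast
      qed
    next
      case False
      then have "card V = 0 \<or> card V = 1" by auto
      then show ?thesis
      proof
        assume "card V = 0"
        then have "V = {}" using fin by simp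
        moreover have "graph_iso ({}::'a set) E ({}::nat set) bull_adj"
          unfolding graph_iso_def by (rule exI[of _ "\<lambda>_. 0::nat"]) (simp add: bij_betw_def)
        ultimately show ?thesis using twin_elim.refl by blast
      next
        assume "card V = 1"
        then obtain x where x: "V = {x}" using card_1_singletonE by blast
        have nx: "\<not> E x x" using irr x by auto
        have nb: "\<not> bull_adj 0 0" by (simp add: bull_adj_def doubleton_eq_iff)
        have "bij_betw (\<lambda>_. 0::nat) {x} {0}" by (simp add: bij_betw_def)
        then have "graph_iso {x} E {0::nat} bull_adj"
          unfolding graph_iso_def using nx nb by (intro exI[of _ "\<lambda>_. 0::nat"]) simp
        then have "graph_iso V E {0::nat} bull_adj" using x by simp
        moreover have "{0::nat} \<subseteq> {0..<5}" by simp
        ultimately show ?thesis using twin_elim.refl by blast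
      qed
    qed
  qed
qed

theorem mainTheorem7:
  fixes V :: "'a set" and E :: "'a \<Rightarrow> 'a \<Rightarrow> bool"
  assumes "simple_graph V E" and "connected_graph V E"
  shows "DH_coDH V E \<longleftrightarrow>
    (\<exists>W. twin_elim E V W \<and> (\<exists>S\<subseteq>{0..<5::nat}. graph_iso W E S bull_adj))"
proof
  assume h: "DH_coDH V E"
  have "cls V E" unfolding cls_def using assms(1) h by (rule conjI)
  then show "\<exists>W. twin_elim E V W \<and> (\<exists>S\<subseteq>{0..<5::nat}. graph_iso W E S bull_adj)"
    by (rule fw)
next
  assume "\<exists>W. twin_elim E V W \<and> (\<exists>S\<subseteq>{0..<5::nat}. graph_iso W E S bull_adj)"
  then obtain W where w: "twin_elim E V W" "\<exists>S\<subseteq>{0..<5::nat}. graph_iso W E S bull_adj" by blast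
  show "DH_coDH V E" by (rule bw[OF w(1) assms(1) w(2)])
qed

end
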